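(* Under Assumption 1, there exist constants $c_1,c_2>0$, depending only on the problem data ($A,b,C,c$, the $f_i$ and $W$), such that for every $\lambda\in\mathbb{D}$, \[ \|\lambda-\bar\lambda\|_W\ \le\ \big(c_1+c_2\,\mathcal T(\lambda)^2\big)\,\|\nabla^+ d(\lambda)\|_W , \] where $\bar\lambda=[\lambda]^W_{\Lambda^*}$.
   Context: Standing setup. Consider $\min_{z}\ f(z)=\sum_{i=1}^M f_i(z_i)$ subject to $Az=b$, $Cz\le c$, where $z=(z_1,\dots,z_M)$, $z_i\in\mathbb{R}^{n_i}$, $n=\sum_i n_i$, $A\in\mathbb{R}^{p\times n}$, $C\in\mathbb{R}^{q\times n}$, $b\in\mathbb{R}^p$, $c\in\mathbb{R}^q$, and each $f_i:\mathbb{R}^{n_i}\to\mathbb{R}$ is convex. The rows are partitioned into $\bar M$ blocks: $A$ has blocks $A_{ji}\in\mathbb{R}^{p_j\times n_i}$ and $C$ has blocks $C_{ji}\in\mathbb{R}^{q_j\times n_i}$. A matrix $E\in\{0,1\}^{\bar M\times M}$ is given such that $E_{ji}=0$ implies $A_{ji}=0$ and $C_{ji}=0$; $\bar{\mathcal N}_i=\{j: E_{ji}\neq 0\}$, $\mathcal N_j=\{i:E_{ji}\ne 0\}$. Let $G=\begin{bmatrix}A\\ C\end{bmatrix}$, $g=\begin{bmatrix}b\\ c\end{bmatrix}$, $\lambda=(\nu,\mu)$, $\mathbb{D}=\mathbb{R}^p\times\mathbb{R}^q_+$, $\mathcal L(z,\lambda)=f(z)+\langle\lambda,Gz-g\rangle$,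 $d(\lambda)=\min_{z}\mathcal L(z,\lambda)$, $\nabla d(\lambda)=Gz(\lambda)-g$ with $z(\lambda)$ the unique minimizer of $\mathcal L(\cdot,\lambda)$. $L_{d_i}=\big\|\begin{bmatrix}[A_{ji}]_{j\in\bar{\mathcal N}_i}\\ [C_{ji}]_{j\in\bar{\mathcal N}_i}\end{bmatrix}\big\|^2/\sigma_i$; $W=\mathrm{diag}(W_\nu,W_\mu)$, $W_\nu=\mathrm{diag}\big(\sum_{i\in\mathcal N_j}L_{d_i}I_{p_j};\ j\big)$, $W_\mu=\mathrm{diag}\big(\sum_{i\in\mathcal N_j}L_{d_i}I_{q_j};\ j\big)$, assumed positive definite; $\|x\|_W=\sqrt{x^TWx}$. Assumption 1: (a) each $f_i$ is $\sigma_i$-strongly convex and has $L_i$-Lipschitz gradient (Euclidean norm); (b) $A$ has full row rank and there is $\tilde z$ with $A\tilde z=b$, $C\tilde z<c$. Under Assumption 1 the set $\Lambda^*$ of maximizers of $d$ over $\mathbb{D}$ is nonempty, convex and bounded, and $\max_{\mathbb D} d=f^*$ (the primal optimal value). Notation: $[x]^W_S$ denotes the projection of $x$ onto a closed convex set $S$ with respect to $\|\cdot\|_W$. The proximal residual is $\nabla^+ d(\lambda)=[\lambda+W^{-1}\nabla d(\lambda)]^W_{\mathbb D}-\lambda$ for $\lambda\in\mathbb D$. $\mathcal T(\lambda)=\max_{\lambda^*\in\Lambda^*}\|\lambda-\lambda^*\|_W$. *)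

theory Defs
  imports "HOL-Analysis.Analysis"
begin

text \<open>
Primal variable z :: real^'n; the coordinates are partitioned into
primal blocks by blk :: 'n => 'm (block i = coordinates c with blk c = i, so
z_i in R^{n_i}).  The constraint rows (rows of G = [A; C]) are indexed by 'r;
eqr r = True marks rows of A (equalities), eqr r = False rows of C
(inequalities).  Rows are partitioned into dual blocks by rblk :: 'r => 'k.
A function f_i : R^{n_i} -> R is represented by its lifting F i : real^'n => real,
which depends only on the coordinates of block i.
\<close>

definition blockproj :: "('n \<Rightarrow> 'm) \<Rightarrow> 'm \<Rightarrow> real^'n \<Rightarrow> real^'n" where
  "blockproj blk i x = (\<chi> c. if blk c = i then x $ c else 0)"

definition depends_only_on_block :: "('n \<Rightarrow> 'm) \<Rightarrow> 'm \<Rightarrow> (real^'n \<Rightarrow> real) \<Rightarrow> bool" where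
  "depends_only_on_block blk i F \<longleftrightarrow>
     (\<forall>x y. blockproj blk i x = blockproj blk i y \<longrightarrow> F x = F y)"

definition block_strongly_convex ::
  "('n \<Rightarrow> 'm) \<Rightarrow> 'm \<Rightarrow> real \<Rightarrow> (real^'n \<Rightarrow> real) \<Rightarrow> bool" where
  "block_strongly_convex blk i \<sigma> F \<longleftrightarrow>
     convex_on UNIV (\<lambda>x. F x - \<sigma> / 2 * (norm (blockproj blk i x))\<^sup>2)"

definition lipschitz_gradient :: "real \<Rightarrow> (real^'n \<Rightarrow> real) \<Rightarrow> bool" where
  "lipschitz_gradient L F \<longleftrightarrow>
     (\<exists>gr. (\<forall>x. (F has_derivative (\<lambda>h. gr x \<bullet> h)) (at x)) \<and>
           (\<forall>x y. norm (gr x - gr y) \<le> L * norm (x - y)))"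

definition fobj :: "('m::finite \<Rightarrow> real^'n \<Rightarrow> real) \<Rightarrow> real^'n \<Rightarrow> real" where
  "fobj F z = (\<Sum>i\<in>UNIV. F i z)"

definition lagr :: "('m::finite \<Rightarrow> real^'n \<Rightarrow> real) \<Rightarrow> real^'n^'r \<Rightarrow> real^'r
                    \<Rightarrow> real^'n \<Rightarrow> real^'r \<Rightarrow> real" where
  "lagr F G g z l = fobj F z + l \<bullet> (G *v z - g)"

definition dualf :: "('m::finite \<Rightarrow> real^'n \<Rightarrow> real) \<Rightarrow> real^'n^'r \<Rightarrow> real^'r
                    \<Rightarrow> real^'r \<Rightarrow> real" where
  "dualf F G g l = (INF z. lagr F G g z l)"

definition zopt :: "('m::finite \<Rightarrow> real^'n \<Rightarrow> real) \<Rightarrow> real^'n^'r \<Rightarrow> real^'r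
                    \<Rightarrow> real^'r \<Rightarrow> real^'n" where
  "zopt F G g l = (THE z. \<forall>z'. lagr F G g z l \<le> lagr F G g z' l)"

definition graddual :: "('m::finite \<Rightarrow> real^'n \<Rightarrow> real) \<Rightarrow> real^'n^'r \<Rightarrow> real^'r
                    \<Rightarrow> real^'r \<Rightarrow> real^'r" where
  "graddual F G g l = G *v zopt F G g l - g"

definition dualset :: "('r \<Rightarrow> bool) \<Rightarrow> (real^'r) set" where
  "dualset eqr = {l. \<forall>r. \<not> eqr r \<longrightarrow> 0 \<le> l $ r}"

definition dualopt :: "('m::finite \<Rightarrow> real^'n \<Rightarrow> real) \<Rightarrow> real^'n^'r \<Rightarrow> real^'r
                    \<Rightarrow> ('r \<Rightarrow> bool) \<Rightarrow> (real^'r) set" where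
  "dualopt F G g eqr = {l \<in> dualset eqr. \<forall>l' \<in> dualset eqr. dualf F G g l' \<le> dualf F G g l}"

text \<open>L_{d_i} = || [A_ji; C_ji]_{j in Nbar_i} ||^2 / sigma_i  (spectral norm, realised as
  the operator norm of the submatrix padded with zeros).\<close>
definition Ldi :: "real^'n^'r \<Rightarrow> ('n \<Rightarrow> 'm) \<Rightarrow> ('r \<Rightarrow> 'k) \<Rightarrow> ('k \<Rightarrow> 'm \<Rightarrow> bool)
                  \<Rightarrow> ('m \<Rightarrow> real) \<Rightarrow> 'm \<Rightarrow> real" where
  "Ldi G blk rblk E \<sigma> i =
     (onorm (\<lambda>x::real^'n. (\<chi> r. if E (rblk r) i then (G *v blockproj blk i x) $ r else 0)
               :: real^'r))\<^sup>2 / \<sigma> i"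

definition Wdiag :: "real^'n^'r \<Rightarrow> ('n \<Rightarrow> 'm::finite) \<Rightarrow> ('r \<Rightarrow> 'k) \<Rightarrow> ('k \<Rightarrow> 'm \<Rightarrow> bool)
                  \<Rightarrow> ('m \<Rightarrow> real) \<Rightarrow> 'r \<Rightarrow> real" where
  "Wdiag G blk rblk E \<sigma> r = (\<Sum>i \<in> {i. E (rblk r) i}. Ldi G blk rblk E \<sigma> i)"

definition wnorm :: "('r::finite \<Rightarrow> real) \<Rightarrow> real^'r \<Rightarrow> real" where
  "wnorm w x = sqrt (\<Sum>r\<in>UNIV. w r * (x $ r)\<^sup>2)"

definition wproj :: "('r::finite \<Rightarrow> real) \<Rightarrow> (real^'r) set \<Rightarrow> real^'r \<Rightarrow> real^'r" where
  "wproj w S x = (THE y. y \<in> S \<and> (\<forall>y'\<in>S. wnorm w (x - y) \<le> wnorm w (x - y')))"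

definition winv :: "('r::finite \<Rightarrow> real) \<Rightarrow> real^'r \<Rightarrow> real^'r" where
  "winv w v = (\<chi> r. v $ r / w r)"

definition proxres :: "('r::finite \<Rightarrow> real) \<Rightarrow> ('r \<Rightarrow> bool) \<Rightarrow> (real^'r \<Rightarrow> real^'r)
                       \<Rightarrow> real^'r \<Rightarrow> real^'r" where
  "proxres w eqr gd l = wproj w (dualset eqr) (l + winv w (gd l)) - l"

definition Tfun :: "('r::finite \<Rightarrow> real) \<Rightarrow> (real^'r) set \<Rightarrow> real^'r \<Rightarrow> real" where
  "Tfun w S l = (SUP s\<in>S. wnorm w (l - s))"

end

theory Submission
  imports Defs
begin


lemma norm_sq_vec: "(norm (x::real^'r))\<^sup>2 = (\<Sum>i\<in>UNIV. (x$i)\<^sup>2)"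
  by (simp add: norm_vec_def L2_set_def sum_nonneg)

lemma inner_vec_real: "inner (x::real^'r) y = (\<Sum>i\<in>UNIV. x$i * y$i)"
  by (simp add: inner_vec_def)

lemma homog_lower_bound:
  fixes \<phi> :: "'a::euclidean_space \<Rightarrow> real"
  assumes C: "closed C" and cone: "\<And>x t. x\<in>C \<Longrightarrow> t>0 \<Longrightarrow> t *\<^sub>R x \<in> C"
    and cont: "continuous_on UNIV \<phi>" and hom: "\<And>x t. t > 0 \<Longrightarrow> \<phi> (t *\<^sub>R x) = t * \<phi> x"
    and pos: "\<And>x. x\<in>C \<Longrightarrow> x\<noteq>0 \<Longrightarrow> \<phi> x > 0"
  shows "\<exists>c>0. \<forall>x\<in>C. c * norm x \<le> \<phi> x"
proof -
  have phi0: "\<phi> 0 = 0" using hom[of 2 0] by simp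
  let ?K = "C \<inter> sphere 0 1"
  have Kc: "compact ?K" using C by (simp add: closed_Int_compact)
  have key: "\<And>x c. x \<in> C \<Longrightarrow> x \<noteq> 0 \<Longrightarrow> (\<And>u. u\<in>?K \<Longrightarrow> c \<le> \<phi> u) \<Longrightarrow> c * norm x \<le> \<phi> x"
  proof -
    fix x c assume x: "x \<in> C" "x \<noteq> 0" and h: "\<And>u. u\<in>?K \<Longrightarrow> c \<le> \<phi> u"
    have np: "norm x > 0" using x by simp
    have u: "(1/norm x) *\<^sub>R x \<in> ?K" using x cone[of x "1/norm x"] np by simp
    have "\<phi> x = norm x * \<phi> ((1/norm x) *\<^sub>R x)"
      using hom[of "norm x" "(1/norm x) *\<^sub>R x"] np by simp
    then show "c * norm x \<le> \<phi> x" using h[OF u] np by (simp add: mult.commute)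
  qed
  show ?thesis
  proof (cases "?K = {}")
    case True
    have "\<forall>x\<in>C. 1 * norm x \<le> \<phi> x"
    proof
      fix x assume x: "x \<in> C"
      show "1 * norm x \<le> \<phi> x"
      proof (cases "x = 0")
        case True then show ?thesis using phi0 by simp
      next
        case False then show ?thesis using key[OF x False, of 1] True by blast
      qed
    qed
    then show ?thesis by (intro exI[of _ 1]) simp
  next
    case False
    obtain m where m: "m \<in> ?K" "\<forall>y\<in>?K. \<phi> m \<le> \<phi> y"
      using continuous_attains_inf[OF Kc False continuous_on_subset[OF cont]] by blast
    have "m \<noteq> 0" using m by auto
    then have mpos: "\<phi> m > 0" using m pos by auto
    have "\<forall>x\<in>C. \<phi> m * norm x \<le> \<phi> x"
    proof
      fix x assume x: "x \<in> C"
      show "\<phi> m * norm x \<le> \<phi> x"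
      proof (cases "x = 0")
        case True then show ?thesis using phi0 by simp
      next
        case False then show ?thesis using key[OF x False, of "\<phi> m"] m by blast
      qed
    qed
    then show ?thesis using mpos by blast
  qed
qed



definition sc :: "('r::finite \<Rightarrow> real) \<Rightarrow> real^'r \<Rightarrow> real^'r" where
  "sc w x = (\<chi> r. sqrt (w r) * x$r)"

lemma sc_linear: "linear (sc w)"
  by (rule linearI) (simp_all add: sc_def vec_eq_iff algebra_simps)

lemma sc_inj: "(\<forall>r. w r > 0) \<Longrightarrow> inj (sc w)"
  by (auto simp: inj_def sc_def vec_eq_iff) (metis less_irrefl)

lemma wnorm_sc: "(\<forall>r. w r \<ge> 0) \<Longrightarrow> wnorm w x = norm (sc w x)"
  by (simp add: wnorm_def norm_vec_def L2_set_def sc_def power_mult_distrib)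

lemma wnorm_nonneg: "(\<forall>r. w r \<ge> 0) \<Longrightarrow> wnorm w x \<ge> 0" by (simp add: wnorm_def sum_nonneg)

lemma wnorm_le: assumes "\<forall>r. w r \<ge> 0" "\<forall>r. w r \<le> M"
  shows "wnorm w x \<le> sqrt M * norm x"
proof -
  have "(\<Sum>r\<in>UNIV. w r * (x $ r)\<^sup>2) \<le> (\<Sum>r\<in>UNIV. M * (x $ r)\<^sup>2)"
    by (rule sum_mono) (simp add: assms mult_right_mono)
  also have "\<dots> = M * (norm x)^2" by (simp add: norm_sq_vec sum_distrib_left)
  finally have "wnorm w x \<le> sqrt (M * (norm x)^2)" by (simp add: wnorm_def)
  also have "\<dots> = sqrt M * norm x" by (simp add: real_sqrt_mult)
  finally show ?thesis .
qed

lemma wnorm_ge: assumes "\<forall>r. w r \<ge> m" "m \<ge> 0"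
  shows "sqrt m * norm x \<le> wnorm w x"
proof -
  have "m * (norm x)^2 = (\<Sum>r\<in>UNIV. m * (x $ r)\<^sup>2)" by (simp add: norm_sq_vec sum_distrib_left)
  also have "\<dots> \<le> (\<Sum>r\<in>UNIV. w r * (x $ r)\<^sup>2)"
    by (rule sum_mono) (simp add: assms mult_right_mono)
  finally have "sqrt (m * (norm x)^2) \<le> wnorm w x" by (simp add: wnorm_def)
  moreover have "sqrt (m * (norm x)^2) = sqrt m * norm x" by (simp add: real_sqrt_mult)
  ultimately show ?thesis by simp
qed

lemma wproj_char:
  assumes w: "\<forall>r. w r > 0" and S: "closed S" "convex S" "S \<noteq> {}"
  shows "wproj w S x \<in> S \<and> (\<forall>y\<in>S. wnorm w (x - wproj w S x) \<le> wnorm w (x - y))"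
    and "y \<in> S \<Longrightarrow> (\<forall>y'\<in>S. wnorm w (x - y) \<le> wnorm w (x - y')) \<Longrightarrow> wproj w S x = y"
proof -
  have w0: "\<forall>r. w r \<ge> 0" using w less_imp_le by blast
  let ?S = "sc w ` S"
  have cl: "closed ?S" by (rule closed_injective_linear_image[OF S(1) sc_linear sc_inj[OF w]])
  have cv: "convex ?S" by (rule convex_linear_image[OF sc_linear S(2)])
  have ne: "?S \<noteq> {}" using S(3) by simp
  have wd: "\<And>y. wnorm w (x - y) = dist (sc w x) (sc w y)"
    by (simp add: wnorm_sc[OF w0] dist_norm linear_diff[OF sc_linear])
  have uniq: "\<And>y. y \<in> S \<Longrightarrow> (\<forall>y'\<in>S. wnorm w (x - y) \<le> wnorm w (x - y')) \<Longrightarrow> sc w y = closest_point ?S (sc w x)"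
    by (rule closest_point_unique[OF cv cl]) (auto simp: wd)
  obtain p where p: "p \<in> S" "sc w p = closest_point ?S (sc w x)"
    using closest_point_in_set[OF cl ne, of "sc w x"] by auto
  have pmin: "\<forall>y'\<in>S. wnorm w (x - p) \<le> wnorm w (x - y')"
    using closest_point_le[OF cl] p by (auto simp: wd)
  have eq: "y = p" if "y \<in> S" "\<forall>y'\<in>S. wnorm w (x - y) \<le> wnorm w (x - y')" for y
  proof -
    have "sc w y = sc w p" using uniq[OF that] p(2) by simp
    then show ?thesis by (rule injD[OF sc_inj[OF w]])
  qed
  have "wproj w S x = p" unfolding wproj_def
  proof (rule the_equality)
    show "p \<in> S \<and> (\<forall>y'\<in>S. wnorm w (x - p) \<le> wnorm w (x - y'))" using p(1) pmin by blast
    show "\<And>y. y \<in> S \<and> (\<forall>y'\<in>S. wnorm w (x - y) \<le> wnorm w (x - y')) \<Longrightarrow> y = p"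
      using eq by blast
  qed
  then show "wproj w S x \<in> S \<and> (\<forall>y\<in>S. wnorm w (x - wproj w S x) \<le> wnorm w (x - y))"
    using p pmin by simp
  show "y \<in> S \<Longrightarrow> (\<forall>y'\<in>S. wnorm w (x - y) \<le> wnorm w (x - y')) \<Longrightarrow> wproj w S x = y"
    using eq \<open>wproj w S x = p\<close> by simp
qed

lemma dualset_closed: "closed (dualset eqr)"
proof -
  have "dualset eqr = (\<Inter>r\<in>{r. \<not> eqr r}. {l. 0 \<le> l$r})" by (auto simp: dualset_def)
  moreover have "closed {l::real^'a. 0 \<le> l$r}" for r
    by (rule closed_Collect_le) (auto intro: continuous_intros)
  ultimately show ?thesis by auto
qed

lemma dualset_convex: "convex (dualset eqr)"
  unfolding dualset_def convex_def by (auto intro!: add_nonneg_nonneg mult_nonneg_nonneg)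

definition clip :: "('r::finite \<Rightarrow> bool) \<Rightarrow> real^'r \<Rightarrow> real^'r" where
  "clip eqr y = (\<chi> r. if eqr r then y$r else max 0 (y$r))"

lemma clip_in: "clip eqr y \<in> dualset eqr" by (simp add: clip_def dualset_def)

lemma wproj_dualset: assumes w: "\<forall>r. w r > 0"
  shows "wproj w (dualset eqr) y = clip eqr y"
proof (rule wproj_char(2)[OF w dualset_closed dualset_convex])
  show "dualset eqr \<noteq> {}" using clip_in by blast
  show "clip eqr y \<in> dualset eqr" by (rule clip_in)
  show "\<forall>y'\<in>dualset eqr. wnorm w (y - clip eqr y) \<le> wnorm w (y - y')"
  proof
    fix y' assume y': "y' \<in> dualset eqr"
    have "(\<Sum>r\<in>UNIV. w r * ((y - clip eqr y) $ r)\<^sup>2) \<le> (\<Sum>r\<in>UNIV. w r * ((y - y') $ r)\<^sup>2)"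
    proof (rule sum_mono)
      fix r
      have "((y - clip eqr y) $ r)\<^sup>2 \<le> ((y - y') $ r)\<^sup>2"
      proof (cases "eqr r")
        case True then show ?thesis by (simp add: clip_def)
      next
        case False
        then have "0 \<le> y'$r" using y' by (simp add: dualset_def)
        then show ?thesis using False
          by (cases "y$r \<ge> 0") (auto simp: clip_def abs_le_square_iff[symmetric])
      qed
      then show "w r * ((y - clip eqr y) $ r)\<^sup>2 \<le> w r * ((y - y') $ r)\<^sup>2"
        using w by (simp add: mult_left_mono less_imp_le)
    qed
    then show "wnorm w (y - clip eqr y) \<le> wnorm w (y - y')" by (simp add: wnorm_def)
  qed
qed



definition SCon :: "('a::real_inner \<Rightarrow> real) \<Rightarrow> real \<Rightarrow> bool" where
  "SCon h s \<longleftrightarrow> (\<forall>a b t. 0 \<le> t \<longrightarrow> t \<le> 1 \<longrightarrow>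
     h ((1-t) *\<^sub>R a + t *\<^sub>R b) \<le> (1-t) * h a + t * h b - s/2 * t * (1-t) * (norm (a - b))\<^sup>2)"

lemma quad_id:
  fixes u v :: "'a::real_inner"
  shows "(norm ((1-t) *\<^sub>R u + t *\<^sub>R v))\<^sup>2 = (1-t)*(norm u)\<^sup>2 + t*(norm v)\<^sup>2 - t*(1-t)*(norm (u - v))\<^sup>2"
  by (simp add: power2_norm_eq_inner inner_add inner_diff inner_scaleR inner_commute algebra_simps)

lemma SC_growth:
  assumes sc: "SCon h s" and s: "s > 0" and min: "\<forall>y. h z \<le> h y"
  shows "h z + s/2 * (norm (y - z))\<^sup>2 \<le> h y"
proof (rule field_le_epsilon)
  fix e :: real assume e: "e > 0"
  define D where "D = s/2 * (norm (y - z))\<^sup>2"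
  have D0: "D \<ge> 0" using s by (simp add: D_def)
  define t where "t = min 1 (e / (D + 1))"
  have t0: "t > 0" and t1: "t \<le> 1" using e D0 by (auto simp: t_def)
  have tD: "t * D \<le> e"
  proof -
    have "t \<le> e / (D+1)" by (simp add: t_def)
    then have "t * (D+1) \<le> e" using D0 by (simp add: pos_le_divide_eq)
    then show ?thesis using t0 by (simp add: algebra_simps)
  qed
  have "h z \<le> h ((1-t) *\<^sub>R z + t *\<^sub>R y)" using min by blast
  also have "\<dots> \<le> (1-t) * h z + t * h y - s/2 * t * (1-t) * (norm (z - y))\<^sup>2"
    using sc t0 t1 unfolding SCon_def by auto
  finally have "t * h z \<le> t * h y - t * ((1-t) * D)"
    by (simp add: D_def norm_minus_commute algebra_simps)
  then have "h z \<le> h y - (1-t) * D" using t0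
    by (simp add: right_diff_distrib[symmetric] mult_le_cancel_left_pos)
  then have "h z + D \<le> h y + t*D" by (simp add: algebra_simps)
  then show "h z + s/2 * (norm (y - z))\<^sup>2 \<le> h y + e" using tD unfolding D_def by linarith
qed

lemma SC_unique_min:
  assumes sc: "SCon h s" and s: "s > 0" and m1: "\<forall>y. h z1 \<le> h y" and m2: "\<forall>y. h z2 \<le> h y"
  shows "z1 = z2"
proof -
  have "h z1 + s/2 * (norm (z2 - z1))\<^sup>2 \<le> h z2" by (rule SC_growth[OF sc s m1])
  moreover have "h z2 \<le> h z1" using m2 by blast
  ultimately have "(norm (z2 - z1))\<^sup>2 \<le> 0" using s
    by (smt (verit, del_insts) divide_pos_pos mult_pos_pos zero_less_power2)
  then show ?thesis by simp
qed

lemma SC_exists_min: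
  fixes h :: "'a::euclidean_space \<Rightarrow> real"
  assumes sc: "SCon h s" and s: "s > 0" and cont: "continuous_on UNIV h"
  shows "\<exists>z. \<forall>y. h z \<le> h y"
proof -
  have sne: "sphere (0::'a) 1 \<noteq> {}"
    using vector_choose_size[of 1] by (auto simp: sphere_def)
  obtain m where "\<forall>u\<in>sphere (0::'a) 1. h m \<le> h u"
    using continuous_attains_inf[OF compact_sphere sne continuous_on_subset[OF cont]] by blast
  then have mb: "\<And>u. norm u = 1 \<Longrightarrow> h m \<le> h u" by simp
  define R where "R = 2 + 2 * \<bar>h m - h 0\<bar> / s"
  have R2: "R \<ge> 2" using s by (simp add: R_def)
  have out: "h 0 < h y" if y: "norm y \<ge> R" for y
  proof -
    define r where "r = norm y"
    have r1: "r > 1" using y R2 by (simp add: r_def)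
    define t where "t = 1 / r"
    have t0: "0 \<le> t" "t \<le> 1" using r1 by (auto simp: t_def)
    have u: "norm (t *\<^sub>R y) = 1" using r1 by (auto simp: t_def r_def)
    have "h (t *\<^sub>R y) = h ((1-t) *\<^sub>R 0 + t *\<^sub>R y)" by simp
    also have "\<dots> \<le> (1-t) * h 0 + t * h y - s/2 * t * (1-t) * (norm (0 - y))\<^sup>2"
      using sc t0 unfolding SCon_def by blast
    finally have "h m \<le> (1-t) * h 0 + t * h y - s/2 * t * (1-t) * r\<^sup>2"
      using mb[OF u] by (simp add: r_def)
    then have "r * h m \<le> r * ((1-t) * h 0 + t * h y - s/2 * t * (1-t) * r\<^sup>2)"
      using r1 by (simp add: mult_left_mono)
    also have "\<dots> = (r - 1) * h 0 + h y - s/2 * (r - 1) * r"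
      using r1 by (simp add: t_def field_simps power2_eq_square)
    finally have A: "r * h m \<le> (r - 1) * h 0 + h y - s/2 * (r - 1) * r" .
    have "r - 1 \<ge> 1 + 2 * \<bar>h m - h 0\<bar> / s" using y R_def r_def by simp
    then have "s/2 * (r - 1) \<ge> s/2 + \<bar>h m - h 0\<bar>" using s by (simp add: field_simps)
    then have "s/2 * (r-1) * r \<ge> (s/2 + \<bar>h m - h 0\<bar>) * r" using r1 by (simp add: mult_right_mono)
    then have B: "h y \<ge> r * h m - (r - 1) * h 0 + (s/2 + \<bar>h m - h 0\<bar>) * r" using A by linarith
    have C: "r * h m - (r - 1) * h 0 + (s/2 + \<bar>h m - h 0\<bar>) * r
        = h 0 + r * ((h m - h 0) + \<bar>h m - h 0\<bar>) + s/2 * r" by (simp add: algebra_simps)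
    have D: "r * ((h m - h 0) + \<bar>h m - h 0\<bar>) \<ge> 0" using r1 by (intro mult_nonneg_nonneg) auto
    have E: "s/2 * r > 0" using s r1 by simp
    show ?thesis using B C D E by linarith
  qed
  have cb: "compact (cball (0::'a) R)" "cball (0::'a) R \<noteq> {}" using R2 by auto
  obtain z where z: "z \<in> cball 0 R" "\<forall>y\<in>cball 0 R. h z \<le> h y"
    using continuous_attains_inf[OF cb continuous_on_subset[OF cont]] by blast
  have "\<forall>y. h z \<le> h y"
  proof
    fix y show "h z \<le> h y"
    proof (cases "norm y \<le> R")
      case True then show ?thesis using z by simp
    next
      case False
      then have "h 0 < h y" using out by simp
      moreover have "h z \<le> h 0" using z R2 by simp
      ultimately show ?thesis by simp
    qed
  qed
  then show ?thesis by blast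
qed



lemma blockproj_comb: "blockproj blk i ((1-t) *\<^sub>R a + t *\<^sub>R b) = (1-t) *\<^sub>R blockproj blk i a + t *\<^sub>R blockproj blk i b"
  by (simp add: blockproj_def vec_eq_iff)

lemma blockproj_diff: "blockproj blk i a - blockproj blk i b = blockproj blk i (a - b)"
  by (simp add: blockproj_def vec_eq_iff)

lemma blockproj_sum_sq: "(\<Sum>i\<in>(UNIV::'m::finite set). (norm (blockproj (blk::'n::finite\<Rightarrow>'m) i x))\<^sup>2) = (norm x)\<^sup>2"
proof -
  have "(\<Sum>i\<in>(UNIV::'m set). (norm (blockproj blk i x))\<^sup>2)
      = (\<Sum>i\<in>UNIV. \<Sum>c\<in>UNIV. (if blk c = i then (x$c)\<^sup>2 else 0))"
    by (simp add: norm_sq_vec blockproj_def if_distrib[of "\<lambda>v. v\<^sup>2"] cong: if_cong)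
  also have "\<dots> = (\<Sum>c\<in>UNIV. \<Sum>i\<in>UNIV. (if blk c = i then (x$c)\<^sup>2 else 0))"
    by (rule sum.swap)
  also have "\<dots> = (\<Sum>c\<in>UNIV. (x$c)\<^sup>2)" by simp
  finally show ?thesis by (simp add: norm_sq_vec)
qed

lemma sc_aux: fixes x xa xb s t N Na Nb Nd :: real
  assumes "x - s/2*N \<le> (1-t)*(xa - s/2*Na) + t*(xb - s/2*Nb)" "N = (1-t)*Na + t*Nb - t*(1-t)*Nd"
  shows "x \<le> (1-t)*xa + t*xb - s/2*t*(1-t)*Nd"
proof -
  have "x \<le> s/2*N + ((1-t)*(xa - s/2*Na) + t*(xb - s/2*Nb))" using assms(1) by linarith
  also have "\<dots> = (1-t)*xa + t*xb - s/2*t*(1-t)*Nd" unfolding assms(2) by (simp add: field_simps; algebra)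
  finally show ?thesis .
qed

locale prob =
  fixes F :: "'m::finite \<Rightarrow> real^'n::finite \<Rightarrow> real" and blk :: "'n \<Rightarrow> 'm" and \<sigma> Lf :: "'m \<Rightarrow> real"
    and G :: "real^'n^'r::finite" and g :: "real^'r" and eqr :: "'r \<Rightarrow> bool"
  assumes sigma_pos: "\<And>i. \<sigma> i > 0"
    and strong_cvx: "\<And>i. block_strongly_convex blk i (\<sigma> i) (F i)"
    and lip_grad: "\<And>i. lipschitz_gradient (Lf i) (F i)"
    and A_full_row_rank: "\<And>v::real^'r. (\<forall>r. \<not> eqr r \<longrightarrow> v $ r = 0) \<Longrightarrow> v v* G = 0 \<Longrightarrow> v = 0"
    and slater: "\<exists>z. \<forall>r. (eqr r \<longrightarrow> (G *v z) $ r = g $ r) \<and> (\<not> eqr r \<longrightarrow> (G *v z) $ r < g $ r)"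
begin

definition "s0 = Min (range \<sigma>)"

lemma s0_pos: "s0 > 0" using sigma_pos by (simp add: s0_def)
lemma s0_le: "s0 \<le> \<sigma> i" by (simp add: s0_def)

lemma SC_Fi:
  assumes t: "0 \<le> t" "t \<le> 1"
  shows "F i ((1-t) *\<^sub>R a + t *\<^sub>R b) \<le> (1-t) * F i a + t * F i b
           - \<sigma> i/2 * t * (1-t) * (norm (blockproj blk i (a - b)))\<^sup>2"
proof -
  let ?P = "blockproj blk i"
  have "F i ((1-t) *\<^sub>R a + t *\<^sub>R b) - \<sigma> i / 2 * (norm (?P ((1-t) *\<^sub>R a + t *\<^sub>R b)))\<^sup>2
      \<le> (1-t) * (F i a - \<sigma> i / 2 * (norm (?P a))\<^sup>2) + t * (F i b - \<sigma> i / 2 * (norm (?P b))\<^sup>2)"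
    using convex_onD[OF strong_cvx[of i, unfolded block_strongly_convex_def] t] by simp
  moreover have "(norm (?P ((1-t) *\<^sub>R a + t *\<^sub>R b)))\<^sup>2
     = (1-t)*(norm (?P a))\<^sup>2 + t*(norm (?P b))\<^sup>2 - t*(1-t)*(norm (?P (a - b)))\<^sup>2"
    by (simp add: blockproj_comb quad_id blockproj_diff)
  ultimately show ?thesis by (rule sc_aux)
qed

lemma SC_fobj: "SCon (fobj F) s0"
  unfolding SCon_def
proof (intro allI impI)
  fix a b :: "real^'n" and t :: real assume t: "0 \<le> t" "t \<le> 1"
  let ?P = "\<lambda>i. blockproj blk i (a - b)"
  have "fobj F ((1-t) *\<^sub>R a + t *\<^sub>R b) \<le> (\<Sum>i\<in>UNIV. (1-t) * F i a + t * F i b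
           - \<sigma> i/2 * t * (1-t) * (norm (?P i))\<^sup>2)"
    unfolding fobj_def by (rule sum_mono) (rule SC_Fi[OF t])
  also have "\<dots> = (1-t) * fobj F a + t * fobj F b - (\<Sum>i\<in>UNIV. \<sigma> i/2 * t * (1-t) * (norm (?P i))\<^sup>2)"
    by (simp add: fobj_def sum.distrib sum_subtractf sum_distrib_left)
  also have "(\<Sum>i\<in>UNIV. \<sigma> i/2 * t * (1-t) * (norm (?P i))\<^sup>2) \<ge> (\<Sum>i\<in>UNIV. s0/2 * t * (1-t) * (norm (?P i))\<^sup>2)"
  proof (rule sum_mono)
    fix i
    have "(s0/2) * (t * (1-t) * (norm (?P i))\<^sup>2) \<le> (\<sigma> i/2) * (t * (1-t) * (norm (?P i))\<^sup>2)"
      by (rule mult_right_mono) (use s0_le[of i] t in simp_all)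
    then show "s0/2 * t * (1-t) * (norm (?P i))\<^sup>2 \<le> \<sigma> i/2 * t * (1-t) * (norm (?P i))\<^sup>2"
      by (simp only: mult.assoc)
  qed
  moreover have "(\<Sum>i\<in>UNIV. s0/2 * t * (1-t) * (norm (?P i))\<^sup>2) = s0/2 * t * (1-t) * (norm (a - b))\<^sup>2"
    by (simp only: sum_distrib_left[symmetric] blockproj_sum_sq)
  ultimately show "fobj F ((1-t) *\<^sub>R a + t *\<^sub>R b) \<le> (1-t) * fobj F a + t * fobj F b - s0/2 * t * (1-t) * (norm (a - b))\<^sup>2"
    by linarith
qed

lemma lagr_eq: "lagr F G g z l = fobj F z + (l v* G) \<bullet> z - l \<bullet> g"
  by (simp add: lagr_def inner_diff_right dot_lmul_matrix)

lemma SC_lagr: "SCon (\<lambda>z. lagr F G g z l) s0"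
  using SC_fobj unfolding SCon_def lagr_eq
  by (simp add: inner_add_right algebra_simps)

definition "gr i = (SOME gr. (\<forall>x. (F i has_derivative (\<lambda>h. gr x \<bullet> h)) (at x)) \<and>
                          (\<forall>x y. norm (gr x - gr y) \<le> Lf i * norm (x - y)))"

lemma gr: "(F i has_derivative (\<lambda>h. gr i x \<bullet> h)) (at x)" "norm (gr i x - gr i y) \<le> Lf i * norm (x - y)"
proof -
  have "\<exists>gr. (\<forall>x. (F i has_derivative (\<lambda>h. gr x \<bullet> h)) (at x)) \<and>
                          (\<forall>x y. norm (gr x - gr y) \<le> Lf i * norm (x - y))"
    using lip_grad[of i] by (simp add: lipschitz_gradient_def)
  from someI_ex[OF this] show "(F i has_derivative (\<lambda>h. gr i x \<bullet> h)) (at x)" "norm (gr i x - gr i y) \<le> Lf i * norm (x - y)"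
    unfolding gr_def by blast+
qed

definition "grad x = (\<Sum>i\<in>UNIV. gr i x)"
definition "Lsum = (\<Sum>i\<in>UNIV. Lf i)"

lemma fobj_fun: "fobj F = (\<lambda>x. \<Sum>i\<in>UNIV. F i x)" by (rule ext) (simp add: fobj_def)

lemma grad_deriv: "(fobj F has_derivative (\<lambda>h. grad x \<bullet> h)) (at x)"
proof -
  have "((\<lambda>x. \<Sum>i\<in>UNIV. F i x) has_derivative (\<lambda>h. \<Sum>i\<in>UNIV. gr i x \<bullet> h)) (at x)"
    by (rule has_derivative_sum) (rule gr)
  then show ?thesis by (simp add: fobj_fun grad_def inner_sum_left)
qed

lemma grad_lip: "norm (grad x - grad y) \<le> Lsum * norm (x - y)"
proof -
  have "norm (grad x - grad y) = norm (\<Sum>i\<in>UNIV. gr i x - gr i y)" by (simp add: grad_def sum_subtractf)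
  also have "\<dots> \<le> (\<Sum>i\<in>UNIV. norm (gr i x - gr i y))" by (rule norm_sum)
  also have "\<dots> \<le> (\<Sum>i\<in>UNIV. Lf i * norm (x - y))" by (rule sum_mono) (rule gr)
  finally show ?thesis by (simp add: Lsum_def sum_distrib_right)
qed

lemma lagr_deriv: "((\<lambda>z. lagr F G g z l) has_derivative (\<lambda>h. (grad z + l v* G) \<bullet> h)) (at z)"
proof -
  have "((\<lambda>z. fobj F z + (l v* G) \<bullet> z - l \<bullet> g) has_derivative (\<lambda>h. grad z \<bullet> h + (l v* G) \<bullet> h - 0)) (at z)"
    by (intro has_derivative_diff has_derivative_add grad_deriv has_derivative_inner_right has_derivative_ident
        has_derivative_const)
  then show ?thesis by (simp add: lagr_eq inner_add_left)
qed

lemma lagr_cont: "continuous_on UNIV (\<lambda>z. lagr F G g z l)"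
  by (rule continuous_at_imp_continuous_on) (use has_derivative_continuous[OF lagr_deriv] in blast)

lemma fobj_cont: "continuous_on UNIV (fobj F)"
  by (rule continuous_at_imp_continuous_on) (use has_derivative_continuous[OF grad_deriv] in blast)

lemma zopt_unique: "\<forall>y. lagr F G g z l \<le> lagr F G g y l \<Longrightarrow> zopt F G g l = z"
  unfolding zopt_def
  by (rule the_equality) (auto intro: SC_unique_min[OF SC_lagr s0_pos])

lemma zopt_min: "lagr F G g (zopt F G g l) l \<le> lagr F G g y l"
proof -
  obtain z where z: "\<forall>y. lagr F G g z l \<le> lagr F G g y l"
    using SC_exists_min[OF SC_lagr s0_pos lagr_cont] by blast
  then show ?thesis using zopt_unique[OF z] by simp
qed

lemma zopt_growth: "lagr F G g (zopt F G g l) l + s0/2 * (norm (y - zopt F G g l))\<^sup>2 \<le> lagr F G g y l"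
  by (rule SC_growth[OF SC_lagr s0_pos]) (use zopt_min in blast)

lemma dualf_eq: "dualf F G g l = lagr F G g (zopt F G g l) l"
  unfolding dualf_def
proof (rule antisym)
  show "(INF z. lagr F G g z l) \<le> lagr F G g (zopt F G g l) l"
    by (rule cINF_lower) (auto intro!: bdd_belowI[of _ "lagr F G g (zopt F G g l) l"] zopt_min)
  show "lagr F G g (zopt F G g l) l \<le> (INF z. lagr F G g z l)"
    by (rule cINF_greatest) (auto intro: zopt_min)
qed

lemma grad_zopt: "grad (zopt F G g l) + l v* G = 0"
proof -
  let ?z = "zopt F G g l"
  have "(\<lambda>h. (grad ?z + l v* G) \<bullet> h) = (\<lambda>v. 0)"
    by (rule differential_zero_maxmin[of ?z UNIV, OF _ _ lagr_deriv]) (auto intro: zopt_min)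
  then have "(grad ?z + l v* G) \<bullet> (grad ?z + l v* G) = 0" by meson
  then show ?thesis by simp
qed

lemma zopt_cong: assumes "l v* G = l' v* G" shows "zopt F G g l = zopt F G g l'"
proof (rule zopt_unique, rule allI)
  fix y
  have "lagr F G g (zopt F G g l') l' \<le> lagr F G g y l'" by (rule zopt_min)
  then show "lagr F G g (zopt F G g l') l \<le> lagr F G g y l"
    using assms by (simp add: lagr_eq)
qed

end


lemma mat_bl: "bounded_linear ((*v) (A::real^'n::finite^'m::finite))"
  by (simp add: linear_conv_bounded_linear[symmetric])

lemma mat_bound: "norm ((A::real^'n::finite^'m::finite) *v x) \<le> onorm ((*v) A) * norm x"
  by (rule onorm[OF mat_bl])

lemma mat_onorm_nonneg: "0 \<le> onorm ((*v) (A::real^'n::finite^'m::finite))"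
  by (rule onorm_pos_le[OF mat_bl])

lemma inner_le_norms: "\<bar>inner (x::'a::real_inner) y\<bar> \<le> norm x * norm y"
  by (rule Cauchy_Schwarz_ineq2)

context prob begin

abbreviation "zz l \<equiv> zopt F G g l"
abbreviation "dd l \<equiv> dualf F G g l"
abbreviation "gd l \<equiv> graddual F G g l"
abbreviation "DD \<equiv> dualset eqr"
abbreviation "Lstar \<equiv> dualopt F G g eqr"

definition "Gn = onorm ((*v) G)"
definition "Gt = onorm ((*v) (transpose G))"

lemma Gn_nonneg: "Gn \<ge> 0" by (simp add: Gn_def mat_onorm_nonneg)
lemma Gt_nonneg: "Gt \<ge> 0" by (simp add: Gt_def mat_onorm_nonneg)
lemma G_bound: "norm (G *v x) \<le> Gn * norm x" by (simp add: Gn_def mat_bound)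
lemma Gt_bound: "norm (x v* G) \<le> Gt * norm x"
  using mat_bound[of "transpose G" x] by (simp add: Gt_def)

lemma gd_def': "gd l = G *v zz l - g" by (simp add: graddual_def)

lemma gd_diff: "gd l - gd l' = G *v (zz l - zz l')"
  by (simp add: gd_def' matrix_vector_mult_diff_distrib)

lemma lagr_shift: "lagr F G g z l = lagr F G g z m - (m - l) \<bullet> (G *v z - g)"
  by (simp add: lagr_def inner_diff_left)

lemma D2: "dd a + gd b \<bullet> (b - a) + s0/2 * (norm (zz b - zz a))\<^sup>2 \<le> dd b"
proof -
  have "lagr F G g (zz a) a + s0/2 * (norm (zz b - zz a))\<^sup>2 \<le> lagr F G g (zz b) a"
    by (rule zopt_growth)
  also have "\<dots> = dd b - gd b \<bullet> (b - a)"
    using lagr_shift[of "zz b" a b] by (simp add: dualf_eq gd_def' inner_commute)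
  finally show ?thesis by (simp add: dualf_eq)
qed

lemma star: "s0 * (norm (zz b - zz a))\<^sup>2 \<le> (gd a - gd b) \<bullet> (b - a)"
proof -
  have 1: "dd a + gd b \<bullet> (b - a) + s0/2 * (norm (zz b - zz a))\<^sup>2 \<le> dd b" by (rule D2)
  have 2: "dd b + gd a \<bullet> (a - b) + s0/2 * (norm (zz a - zz b))\<^sup>2 \<le> dd a" by (rule D2)
  have "norm (zz a - zz b) = norm (zz b - zz a)" by (rule norm_minus_commute)
  moreover have "gd a \<bullet> (a - b) = - (gd a \<bullet> (b - a))" by (simp add: inner_diff_right)
  ultimately show ?thesis using 1 2 by (simp add: inner_diff_left)
qed

lemma upper: "dd b \<le> dd a + gd a \<bullet> (b - a)"
proof -
  have "dd b + gd a \<bullet> (a - b) + s0/2 * (norm (zz a - zz b))\<^sup>2 \<le> dd a" by (rule D2)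
  moreover have "s0/2 * (norm (zz a - zz b))\<^sup>2 \<ge> 0" using s0_pos by simp
  moreover have "gd a \<bullet> (a - b) = - (gd a \<bullet> (b - a))" by (simp add: inner_diff_right)
  ultimately show ?thesis by linarith
qed

definition "Kd = Gn\<^sup>2 / (2 * s0)"
lemma Kd_nonneg: "Kd \<ge> 0" using s0_pos by (simp add: Kd_def)

lemma lower: "dd a + gd a \<bullet> (b - a) - Kd * (norm (b - a))\<^sup>2 \<le> dd b"
proof -
  define x where "x = norm (zz b - zz a)"
  define y where "y = norm (b - a)"
  have 1: "dd a + gd b \<bullet> (b - a) + s0/2 * x\<^sup>2 \<le> dd b" using D2 by (simp add: x_def)
  have "gd b = gd a + (gd b - gd a)" by simp
  then have "gd b = gd a + G *v (zz b - zz a)" using gd_diff[of b a] by simp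
  then have "gd b \<bullet> (b - a) = gd a \<bullet> (b - a) + (G *v (zz b - zz a)) \<bullet> (b - a)"
    by (simp add: inner_add_left)
  moreover have "\<bar>(G *v (zz b - zz a)) \<bullet> (b - a)\<bar> \<le> Gn * x * y"
  proof -
    have "\<bar>(G *v (zz b - zz a)) \<bullet> (b - a)\<bar> \<le> norm (G *v (zz b - zz a)) * y"
      using inner_le_norms by (simp add: y_def)
    also have "\<dots> \<le> Gn * x * y"
      by (rule mult_right_mono) (use G_bound[of "zz b - zz a"] in \<open>simp_all add: x_def y_def\<close>)
    finally show ?thesis .
  qed
  ultimately have 2: "gd b \<bullet> (b - a) \<ge> gd a \<bullet> (b - a) - Gn * x * y" by linarith
  have "(s0 * x - Gn * y)\<^sup>2 / (2 * s0) = s0/2 * x\<^sup>2 - Gn * x * y + Kd * y\<^sup>2"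
    using s0_pos by (simp add: Kd_def power2_eq_square field_simps)
  moreover have "(s0 * x - Gn * y)\<^sup>2 / (2 * s0) \<ge> 0" using s0_pos by simp
  ultimately have "s0/2 * x\<^sup>2 - Gn * x * y + Kd * y\<^sup>2 \<ge> 0" by simp
  then show ?thesis using 1 2 by (simp add: y_def)
qed

end


context prob begin

definition "VI l \<longleftrightarrow> (\<forall>l'\<in>DD. gd l \<bullet> (l' - l) \<le> 0)"

lemma DD_comb: "a \<in> DD \<Longrightarrow> b \<in> DD \<Longrightarrow> 0 \<le> t \<Longrightarrow> t \<le> 1 \<Longrightarrow> a + t *\<^sub>R (b - a) \<in> DD"
proof -
  assume a: "a \<in> DD" and b: "b \<in> DD" and t: "0 \<le> t" "t \<le> 1"
  have "a + t *\<^sub>R (b - a) = (1 - t) *\<^sub>R a + t *\<^sub>R b" by (simp add: algebra_simps)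
  then show ?thesis using convexD_alt[OF dualset_convex a b] t by simp
qed

lemma zero_DD: "0 \<in> DD" by (simp add: dualset_def)

lemma max_imp_VI: assumes l: "l \<in> Lstar" shows "VI l"
  unfolding VI_def
proof
  fix l' assume l': "l' \<in> DD"
  have lD: "l \<in> DD" and lmax: "\<And>m. m \<in> DD \<Longrightarrow> dd m \<le> dd l" using l by (auto simp: dualopt_def)
  define v where "v = gd l \<bullet> (l' - l)"
  define K where "K = Kd * (norm (l' - l))\<^sup>2"
  have K0: "K \<ge> 0" using Kd_nonneg by (simp add: K_def)
  have tK: "v \<le> t * K" if t: "0 < t" "t \<le> 1" for t
  proof -
    have "dd l + gd l \<bullet> ((l + t *\<^sub>R (l' - l)) - l) - Kd * (norm ((l + t *\<^sub>R (l' - l)) - l))\<^sup>2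
        \<le> dd (l + t *\<^sub>R (l' - l))" by (rule lower)
    also have "\<dots> \<le> dd l" using lmax DD_comb[OF lD l'] t by simp
    finally have A: "dd l + gd l \<bullet> (t *\<^sub>R (l' - l)) - Kd * (norm (t *\<^sub>R (l' - l)))\<^sup>2 \<le> dd l"
      by simp
    have "norm (t *\<^sub>R (l' - l)) = t * norm (l' - l)" using t by simp
    then have "Kd * (norm (t *\<^sub>R (l' - l)))\<^sup>2 = t * (t * K)" by (simp add: K_def power2_eq_square)
    moreover have "gd l \<bullet> (t *\<^sub>R (l' - l)) = t * v" by (simp add: v_def)
    ultimately have "t * v - t * (t * K) \<le> 0" using A by linarith
    then have "t * (v - t * K) \<le> 0" by (simp add: algebra_simps)
    then show ?thesis using t by (simp add: mult_le_0_iff)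
  qed
  show "gd l \<bullet> (l' - l) \<le> 0"
    unfolding v_def[symmetric]
  proof (rule field_le_epsilon)
    fix e :: real assume e: "e > 0"
    define t where "t = min 1 (e / (K + 1))"
    have t: "0 < t" "t \<le> 1" using e K0 by (auto simp: t_def)
    have "t * K \<le> e"
    proof -
      have "t \<le> e / (K+1)" by (simp add: t_def)
      then have "t * (K+1) \<le> e" using K0 by (simp add: pos_le_divide_eq)
      then show ?thesis using t by (simp add: algebra_simps)
    qed
    then show "v \<le> 0 + e" using tK[OF t] by simp
  qed
qed

lemma VI_imp_max: assumes "l \<in> DD" "VI l" shows "l \<in> Lstar"
proof -
  have "dd l' \<le> dd l" if "l' \<in> DD" for l'
    using upper[of l' l] assms that unfolding VI_def by fastforce
  then show ?thesis using assms by (simp add: dualopt_def)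
qed

lemma VI_iff: "l \<in> DD \<Longrightarrow> l \<in> Lstar \<longleftrightarrow> VI l"
  using max_imp_VI VI_imp_max by blast

lemma Lstar_sub: "Lstar \<subseteq> DD" by (auto simp: dualopt_def)

lemma dd_cont: "continuous_on UNIV dd"
  unfolding continuous_on_iff
proof (intro ballI allI impI)
  fix x :: "real^'r" and e :: real assume e: "e > 0"
  define N where "N = norm (gd x) + Kd + 1"
  have N: "N > 0" using Kd_nonneg by (simp add: N_def add_nonneg_pos)
  define \<delta> where "\<delta> = min 1 (e / N)"
  have \<delta>: "\<delta> > 0" using e N by (simp add: \<delta>_def)
  have "\<forall>x'\<in>UNIV. dist x' x < \<delta> \<longrightarrow> dist (dd x') (dd x) < e"
  proof (intro ballI impI)
    fix x' assume "dist x' x < \<delta>"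
    then have y: "norm (x' - x) < \<delta>" by (simp add: dist_norm)
    define y where "y = norm (x' - x)"
    have y1: "y \<le> 1" "y \<ge> 0" using y by (auto simp: y_def \<delta>_def)
    have ysq: "y\<^sup>2 \<le> y" using y1 by (simp add: power2_eq_square mult_left_le)
    have ip: "\<bar>gd x \<bullet> (x' - x)\<bar> \<le> norm (gd x) * y" by (simp add: y_def inner_le_norms)
    have up: "dd x' \<le> dd x + gd x \<bullet> (x' - x)" by (rule upper)
    have lo: "dd x + gd x \<bullet> (x' - x) - Kd * y\<^sup>2 \<le> dd x'" using lower[of x x'] by (simp add: y_def)
    have "Kd * y\<^sup>2 \<le> Kd * y" using ysq Kd_nonneg by (simp add: mult_left_mono)
    then have "\<bar>dd x' - dd x\<bar> \<le> (norm (gd x) + Kd) * y" using up lo ip by (simp add: algebra_simps abs_le_iff)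
    also have "\<dots> \<le> N * y" using y1 by (simp add: N_def mult_right_mono)
    also have "\<dots> < N * \<delta>" using y N by (simp add: y_def)
    also have "\<dots> \<le> e" using N e by (simp add: \<delta>_def min_def field_simps split: if_split)
    finally show "dist (dd x') (dd x) < e" by (simp add: dist_real_def)
  qed
  then show "\<exists>\<delta>>0. \<forall>x'\<in>UNIV. dist x' x < \<delta> \<longrightarrow> dist (dd x') (dd x) < e" using \<delta> by blast
qed

end


context prob begin

lemma full_rank_bound: "\<exists>c>0. \<forall>v. (\<forall>r. \<not> eqr r \<longrightarrow> v $ r = 0) \<longrightarrow> c * norm v \<le> norm (v v* G)"
proof -
  let ?C = "{v::real^'r. \<forall>r. \<not> eqr r \<longrightarrow> v $ r = 0}"
  have "?C = (\<Inter>r\<in>{r. \<not> eqr r}. {v. v $ r = 0})" by auto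
  moreover have "closed {v::real^'r. v $ r = 0}" for r
    by (rule closed_Collect_eq) (auto intro: continuous_intros)
  ultimately have cl: "closed ?C" by auto
  have cont: "continuous_on UNIV (\<lambda>v. norm (v v* G))"
  proof -
    have "continuous_on UNIV (\<lambda>v. norm (transpose G *v v))"
      by (intro continuous_on_norm linear_continuous_on[OF mat_bl])
    then show ?thesis by simp
  qed
  have hom: "norm ((t *\<^sub>R v) v* G) = t * norm (v v* G)" if "t > 0" for t v
  proof -
    have "(t *\<^sub>R v) v* G = t *\<^sub>R (v v* G)"
      using matrix_vector_mult_scaleR[of "transpose G" t v] by simp
    then show ?thesis using that by simp
  qed
  have pos: "norm (v v* G) > 0" if "v \<in> ?C" "v \<noteq> 0" for v
    using A_full_row_rank[of v] that by auto
  obtain c where "c > 0" "\<forall>x\<in>?C. c * norm x \<le> norm (x v* G)"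
    using homog_lower_bound[OF cl _ cont hom pos] by auto
  then show ?thesis by auto
qed

lemma coercive: "\<exists>R. \<forall>\<mu>\<in>DD. dd \<mu> \<ge> c \<longrightarrow> norm \<mu> \<le> R"
proof -
  obtain zt where zt: "\<And>r. eqr r \<Longrightarrow> (G *v zt) $ r = g $ r" "\<And>r. \<not> eqr r \<Longrightarrow> (G *v zt) $ r < g $ r"
    using slater by blast
  define sl where "sl r = g $ r - (G *v zt) $ r" for r
  have sl_eq: "eqr r \<Longrightarrow> sl r = 0" for r using zt by (simp add: sl_def)
  have sl_pos: "\<not> eqr r \<Longrightarrow> sl r > 0" for r using zt by (simp add: sl_def)
  define smin where "smin = Min (insert 1 (sl ` {r. \<not> eqr r}))"
  have smin_pos: "smin > 0" using sl_pos by (simp add: smin_def)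
  have smin_le: "\<not> eqr r \<Longrightarrow> smin \<le> sl r" for r by (simp add: smin_def)
  obtain cfr where cfr: "cfr > 0" "\<And>v. (\<forall>r. \<not> eqr r \<longrightarrow> v $ r = 0) \<Longrightarrow> cfr * norm v \<le> norm (v v* G)"
    using full_rank_bound by blast
  have cbne: "cball zt 1 \<noteq> {}" by simp
  obtain zm where "zm \<in> cball zt 1" "\<forall>y\<in>cball zt 1. fobj F y \<le> fobj F zm"
    using continuous_attains_sup[OF compact_cball cbne continuous_on_subset[OF fobj_cont]] by blast
  then have Mb: "\<And>u. norm u \<le> 1 \<Longrightarrow> fobj F (zt + u) \<le> fobj F zm" by (simp add: dist_norm)
  define M where "M = fobj F zm"
  define B where "B = \<bar>M - c\<bar>"
  define nI where "nI = real CARD('r) * (B / smin)"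
  define R where "R = (B + Gt * nI) / cfr + nI"
  have "norm \<mu> \<le> R" if mu: "\<mu> \<in> DD" "dd \<mu> \<ge> c" for \<mu>
  proof -
    have mur: "\<not> eqr r \<Longrightarrow> \<mu> $ r \<ge> 0" for r using mu by (simp add: dualset_def)
    define S where "S = (\<Sum>r\<in>UNIV. \<mu> $ r * sl r)"
    have terms: "\<mu> $ r * sl r \<ge> 0" for r
      using mur[of r] sl_pos[of r] sl_eq[of r] by (cases "eqr r") auto
    have S0: "S \<ge> 0" unfolding S_def by (rule sum_nonneg) (use terms in auto)
    have key: "c \<le> fobj F (zt + u) - S + (\<mu> v* G) \<bullet> u" for u
    proof -
      have "c \<le> dd \<mu>" by (rule mu(2))
      also have "\<dots> \<le> lagr F G g (zt + u) \<mu>" by (simp add: dualf_eq zopt_min)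
      also have "\<dots> = fobj F (zt + u) + \<mu> \<bullet> (G *v zt - g) + (\<mu> v* G) \<bullet> u"
        by (simp add: lagr_def matrix_vector_right_distrib inner_add_right inner_diff_right dot_lmul_matrix)
      also have "\<mu> \<bullet> (G *v zt - g) = - S"
        by (simp add: S_def sl_def inner_vec_real sum_negf[symmetric] algebra_simps)
      finally show ?thesis by simp
    qed
    have SB: "S \<le> B" using key[of 0] Mb[of 0] by (simp add: B_def M_def)
    have qB: "norm (\<mu> v* G) \<le> B"
    proof (cases "\<mu> v* G = 0")
      case True then show ?thesis by (simp add: B_def)
    next
      case False
      define u where "u = - (1 / norm (\<mu> v* G)) *\<^sub>R (\<mu> v* G)"
      have nu: "norm u \<le> 1" using False by (simp add: u_def)
      have "(\<mu> v* G) \<bullet> u = - norm (\<mu> v* G)"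
        using False by (simp add: u_def inner_scaleR_right dot_square_norm power2_eq_square)
      then show ?thesis using key[of u] Mb[OF nu] S0 by (simp add: B_def M_def)
    qed
    define muI where "muI = (\<chi> r. if eqr r then 0 else \<mu> $ r)"
    define muE where "muE = \<mu> - muI"
    have compI: "\<bar>muI $ r\<bar> \<le> B / smin" for r
    proof (cases "eqr r")
      case True then show ?thesis using SB S0 smin_pos by (simp add: muI_def)
    next
      case False
      have "\<mu> $ r * sl r \<le> S" unfolding S_def
        by (rule member_le_sum) (use terms in auto)
      moreover have "\<mu> $ r * smin \<le> \<mu> $ r * sl r" using mur[OF False] smin_le[OF False]
        by (simp add: mult_left_mono)
      ultimately have "\<mu> $ r * smin \<le> B" using SB by linarith
      then show ?thesis using False mur[OF False] smin_pos by (simp add: muI_def pos_le_divide_eq)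
    qed
    have nIb: "norm muI \<le> nI"
    proof -
      have "norm muI \<le> (\<Sum>r\<in>UNIV. \<bar>muI $ r\<bar>)" by (rule norm_le_l1_cart)
      also have "\<dots> \<le> (\<Sum>r\<in>(UNIV::'r set). B / smin)" by (rule sum_mono) (rule compI)
      finally show ?thesis by (simp add: nI_def)
    qed
    have Esupp: "\<forall>r. \<not> eqr r \<longrightarrow> muE $ r = 0" by (simp add: muE_def muI_def)
    have "muE v* G = \<mu> v* G - muI v* G" by (simp add: muE_def vector_matrix_mult_diff_distrib)
    then have "norm (muE v* G) \<le> B + Gt * nI"
      using qB Gt_bound[of muI] nIb Gt_nonneg norm_triangle_ineq4[of "\<mu> v* G" "muI v* G"]
      by (smt (verit, best) mult_left_mono)
    then have "cfr * norm muE \<le> B + Gt * nI" using cfr(2)[OF Esupp] by linarith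
    then have "norm muE \<le> (B + Gt * nI) / cfr" using cfr(1) by (simp add: pos_le_divide_eq mult.commute)
    moreover have "norm \<mu> \<le> norm muE + norm muI"
      using norm_triangle_ineq[of muE muI] by (simp add: muE_def)
    ultimately show ?thesis using nIb by (simp add: R_def)
  qed
  then show ?thesis by blast
qed

lemma Lstar_ne: "\<exists>\<mu>0. \<mu>0 \<in> Lstar"
proof -
  obtain R where R: "\<forall>\<mu>\<in>DD. dd \<mu> \<ge> dd 0 \<longrightarrow> norm \<mu> \<le> R" using coercive by blast
  let ?S = "DD \<inter> cball 0 R"
  have R0: "0 \<in> ?S" using R zero_DD by auto
  have cS: "compact ?S" by (rule closed_Int_compact[OF dualset_closed compact_cball])
  have neS: "?S \<noteq> {}" using R0 by blast
  obtain m where m: "m \<in> ?S" "\<forall>y\<in>?S. dd y \<le> dd m"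
    using continuous_attains_sup[OF cS neS continuous_on_subset[OF dd_cont]] by blast
  have "dd y \<le> dd m" if y: "y \<in> DD" for y
  proof (cases "dd y \<ge> dd 0")
    case True then have "y \<in> ?S" using R y by auto
    then show ?thesis using m by blast
  next
    case False
    have "dd 0 \<le> dd m" using m(2) R0 by blast
    then show ?thesis using False by linarith
  qed
  then have "m \<in> Lstar" using m by (simp add: dualopt_def)
  then show ?thesis by blast
qed

lemma Lstar_bounded: "\<exists>R. \<forall>\<mu>\<in>Lstar. norm \<mu> \<le> R"
proof -
  obtain m where m: "m \<in> Lstar" using Lstar_ne by blast
  obtain R where R: "\<forall>\<mu>\<in>DD. dd \<mu> \<ge> dd m \<longrightarrow> norm \<mu> \<le> R" using coercive by blast
  have "norm \<mu> \<le> R" if "\<mu> \<in> Lstar" for \<mu>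
    using that m R by (auto simp: dualopt_def)
  then show ?thesis by blast
qed

lemma z_common: assumes "a \<in> Lstar" "b \<in> Lstar" shows "zz a = zz b"
proof -
  have dab: "dd a = dd b" using assms by (auto simp: dualopt_def intro: antisym)
  have "VI a" using max_imp_VI[OF assms(1)] .
  then have "gd a \<bullet> (b - a) \<le> 0" using assms(2) Lstar_sub unfolding VI_def by blast
  moreover have "dd b + gd a \<bullet> (a - b) + s0/2 * (norm (zz a - zz b))\<^sup>2 \<le> dd a" by (rule D2)
  moreover have "gd a \<bullet> (a - b) = - (gd a \<bullet> (b - a))" by (simp add: inner_diff_right)
  ultimately have "s0/2 * (norm (zz a - zz b))\<^sup>2 \<le> 0" using dab by linarith
  then have "(norm (zz a - zz b))\<^sup>2 \<le> 0" using s0_pos by (simp add: mult_le_0_iff)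
  then show ?thesis by simp
qed

end


lemma inner_delta: "(x::real^'r::finite) \<bullet> (\<chi> i. if i = r then c else 0) = x $ r * c"
  by (simp add: inner_vec_real if_distrib[of "\<lambda>v. x$_ * v"] cong: if_cong)

context prob begin

definition "mu0 = (SOME m. m \<in> Lstar)"
lemma mu0: "mu0 \<in> Lstar" unfolding mu0_def using Lstar_ne by (rule someI_ex)
definition "q0 = mu0 v* G"
definition "gs = gd mu0"
definition "I0 = {r. \<not> eqr r \<and> gs $ r < 0}"
definition "PP = {\<mu>. \<mu> \<in> DD \<and> \<mu> v* G = q0 \<and> (\<forall>r\<in>I0. \<mu> $ r = 0)}"

lemma vG_eq: "l v* G = - grad (zz l)"
  using grad_zopt[of l] by (metis add_eq_0_iff)

lemma gd_Lstar: "\<mu> \<in> Lstar \<Longrightarrow> gd \<mu> = gs"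
  using z_common[OF _ mu0] by (simp add: gs_def gd_def')

lemma gs_signs: "eqr r \<Longrightarrow> gs $ r = 0" "\<not> eqr r \<Longrightarrow> gs $ r \<le> 0"
proof -
  have vi: "gs \<bullet> (l' - mu0) \<le> 0" if "l' \<in> DD" for l'
    using max_imp_VI[OF mu0] that by (simp add: VI_def gs_def)
  have m0: "mu0 \<in> DD" using mu0 Lstar_sub by blast
  define e where "e c = ((\<chi> i. if i = r then c else 0) :: real^'r)" for c
  have ine: "gs \<bullet> e c = gs $ r * c" for c by (simp add: e_def inner_delta)
  have up: "mu0 + e 1 \<in> DD" using m0 by (auto simp: dualset_def e_def)
  have "gs $ r \<le> 0" using vi[OF up] ine[of 1] by simp
  then show "\<not> eqr r \<Longrightarrow> gs $ r \<le> 0" .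
  assume "eqr r"
  then have "mu0 + e (-1) \<in> DD" using m0 by (auto simp: dualset_def e_def)
  then have "gs $ r \<ge> 0" using vi ine[of "-1"] by fastforce
  with \<open>gs $ r \<le> 0\<close> show "gs $ r = 0" by simp
qed

lemma Lstar_eq: "Lstar = PP"
proof
  show "Lstar \<subseteq> PP"
  proof
    fix \<mu> assume mu: "\<mu> \<in> Lstar"
    have mD: "\<mu> \<in> DD" using mu Lstar_sub by blast
    have "\<mu> v* G = - grad (zz \<mu>)" by (rule vG_eq)
    also have "\<dots> = - grad (zz mu0)" using z_common[OF mu mu0] by simp
    also have "\<dots> = mu0 v* G" by (rule vG_eq[symmetric])
    finally have q: "\<mu> v* G = q0" by (simp add: q0_def)
    have z: "\<mu> $ r = 0" if r: "r \<in> I0" for r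
    proof -
      have rr: "\<not> eqr r" "gs $ r < 0" using r by (auto simp: I0_def)
      define l' where "l' = \<mu> + (\<chi> i. if i = r then - (\<mu> $ r) else 0)"
      have "l' \<in> DD" using mD by (auto simp: dualset_def l'_def)
      then have "gd \<mu> \<bullet> (l' - \<mu>) \<le> 0" using max_imp_VI[OF mu] by (simp add: VI_def)
      then have "gs $ r * (- (\<mu> $ r)) \<le> 0" by (simp add: gd_Lstar[OF mu] l'_def inner_delta)
      moreover have "\<mu> $ r \<ge> 0" using mD rr by (simp add: dualset_def)
      moreover have "(- gs $ r) * \<mu> $ r \<le> 0" using calculation(1) by simp
      then have "\<mu> $ r \<le> 0" using rr by (simp add: zero_le_mult_iff)
      ultimately show ?thesis by simp
    qed
    show "\<mu> \<in> PP" using mD q z by (simp add: PP_def)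
  qed
  show "PP \<subseteq> Lstar"
  proof
    fix \<mu> assume mu: "\<mu> \<in> PP"
    have mD: "\<mu> \<in> DD" and q: "\<mu> v* G = q0" and z: "\<And>r. r \<in> I0 \<Longrightarrow> \<mu> $ r = 0"
      using mu by (auto simp: PP_def)
    have "zz \<mu> = zz mu0" by (rule zopt_cong) (simp add: q q0_def)
    then have g: "gd \<mu> = gs" by (simp add: gs_def gd_def')
    have "VI \<mu>" unfolding VI_def
    proof
      fix l' assume l': "l' \<in> DD"
      have "gs \<bullet> \<mu> = (\<Sum>r\<in>UNIV. gs $ r * \<mu> $ r)" by (simp add: inner_vec_real)
      also have "\<dots> = 0"
      proof (rule sum.neutral, rule ballI)
        fix r
        show "gs $ r * \<mu> $ r = 0"
        proof (cases "eqr r")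
          case True then show ?thesis using gs_signs by simp
        next
          case False
          show ?thesis
          proof (cases "gs $ r < 0")
            case True then show ?thesis using z[of r] False by (simp add: I0_def)
          next
            case f2: False then show ?thesis using gs_signs(2)[OF False] by simp
          qed
        qed
      qed
      finally have 1: "gs \<bullet> \<mu> = 0" .
      have "gs \<bullet> l' = (\<Sum>r\<in>UNIV. gs $ r * l' $ r)" by (simp add: inner_vec_real)
      also have "\<dots> \<le> 0"
      proof (rule sum_nonpos)
        fix r show "gs $ r * l' $ r \<le> 0"
        proof (cases "eqr r")
          case True then show ?thesis using gs_signs by simp
        next
          case False
          then have "l' $ r \<ge> 0" using l' by (simp add: dualset_def)
          then show ?thesis using gs_signs(2)[OF False] by (simp add: mult_nonpos_nonneg)
        qed
      qed
      finally show "gd \<mu> \<bullet> (l' - \<mu>) \<le> 0" using 1 by (simp add: g inner_diff_right)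
    qed
    then show "\<mu> \<in> Lstar" using VI_imp_max[OF mD] by blast
  qed
qed

end


lemma vG_lin: "(a *\<^sub>R x + b *\<^sub>R y) v* (G::real^'n::finite^'r::finite) = a *\<^sub>R (x v* G) + b *\<^sub>R (y v* G)"
proof -
  have "transpose G *v (a *\<^sub>R x + b *\<^sub>R y) = a *\<^sub>R (transpose G *v x) + b *\<^sub>R (transpose G *v y)"
    by (simp add: matrix_vector_right_distrib matrix_vector_mult_scaleR)
  then show ?thesis by simp
qed

lemma vG_scale: "(a *\<^sub>R x) v* (G::real^'n::finite^'r::finite) = a *\<^sub>R (x v* G)"
  using vG_lin[of a x 0 0 G] by simp

context prob begin

lemma PP_closed: "closed PP"
proof -
  have e: "PP = DD \<inter> {\<mu>. transpose G *v \<mu> = q0} \<inter> (\<Inter>r\<in>I0. {\<mu>. \<mu> $ r = 0})"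
    by (auto simp: PP_def)
  have c1: "closed {\<mu>. transpose G *v \<mu> = q0}"
    by (rule closed_Collect_eq[OF linear_continuous_on[OF mat_bl] continuous_on_const])
  have c2: "closed {\<mu>::real^'r. \<mu> $ r = 0}" for r
    by (rule closed_Collect_eq) (auto intro: continuous_intros)
  show ?thesis unfolding e by (intro closed_Int closed_INT ballI dualset_closed c1 c2)
qed

lemma PP_convex: "convex PP"
  unfolding convex_def
proof (intro ballI allI impI)
  fix x y and u v :: real assume x: "x \<in> PP" and y: "y \<in> PP" and uv: "0 \<le> u" "0 \<le> v" "u + v = 1"
  have "u *\<^sub>R x + v *\<^sub>R y \<in> DD" using x y uv dualset_convex unfolding convex_def PP_def by blast
  moreover have "(u *\<^sub>R x + v *\<^sub>R y) v* G = q0"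
    using x y uv by (simp add: vG_lin PP_def scaleR_left_distrib[symmetric])
  moreover have "\<forall>r\<in>I0. (u *\<^sub>R x + v *\<^sub>R y) $ r = 0" using x y by (simp add: PP_def)
  ultimately show "u *\<^sub>R x + v *\<^sub>R y \<in> PP" by (simp add: PP_def)
qed

lemma PP_ne: "mu0 \<in> PP" using mu0 Lstar_eq by simp

definition "TJ J = {v. v v* G = 0 \<and> (\<forall>r\<in>I0. v $ r = 0) \<and> (\<forall>r\<in>J. v $ r \<ge> 0)}"
definition "CJ J = {u. (\<forall>r\<in>J. u $ r \<ge> 0) \<and> (\<forall>v\<in>TJ J. u \<bullet> v \<le> 0)}"
definition "phi u = norm (u v* G) + (\<Sum>r\<in>I0. \<bar>u $ r\<bar>)"

lemma cone_bound: "\<exists>c>0. \<forall>u\<in>CJ J. c * norm u \<le> phi u"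
proof (rule homog_lower_bound)
  have e: "CJ J = (\<Inter>r\<in>J. {u. 0 \<le> u $ r}) \<inter> (\<Inter>v\<in>TJ J. {u. u \<bullet> v \<le> 0})"
    by (auto simp: CJ_def)
  have c1: "closed {u::real^'r. 0 \<le> u $ r}" for r
    by (rule closed_Collect_le) (auto intro: continuous_intros)
  have c2: "closed {u::real^'r. u \<bullet> v \<le> 0}" for v
    using closed_halfspace_le[of v 0] by (simp add: inner_commute)
  show "closed (CJ J)" unfolding e by (intro closed_Int closed_INT ballI c1 c2)
  show "\<And>x t. x \<in> CJ J \<Longrightarrow> 0 < t \<Longrightarrow> t *\<^sub>R x \<in> CJ J"
    by (auto simp: CJ_def mult_nonneg_nonpos)
  have "continuous_on UNIV (\<lambda>u. norm (transpose G *v u) + (\<Sum>r\<in>I0. \<bar>u $ r\<bar>))"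
    by (intro continuous_on_add continuous_on_norm linear_continuous_on[OF mat_bl] continuous_on_sum
        continuous_on_rabs) (auto intro: continuous_intros)
  then show "continuous_on UNIV phi" by (simp add: phi_def[abs_def])
  show "\<And>x t. 0 < t \<Longrightarrow> phi (t *\<^sub>R x) = t * phi x"
    by (simp add: phi_def vG_scale abs_mult sum_distrib_left algebra_simps)
  show "\<And>x. x \<in> CJ J \<Longrightarrow> x \<noteq> 0 \<Longrightarrow> 0 < phi x"
  proof -
    fix u assume u: "u \<in> CJ J" "u \<noteq> 0"
    have ge: "phi u \<ge> 0" by (simp add: phi_def sum_nonneg)
    show "0 < phi u"
    proof (rule ccontr)
      assume "\<not> 0 < phi u"
      then have "phi u = 0" using ge by simp
      moreover have s: "(\<Sum>r\<in>I0. \<bar>u $ r\<bar>) \<ge> 0" by (simp add: sum_nonneg)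
      moreover have "norm (u v* G) \<ge> 0" by simp
      ultimately have a0: "norm (u v* G) = 0" and b: "(\<Sum>r\<in>I0. \<bar>u $ r\<bar>) = 0"
        unfolding phi_def by linarith+
      then have a: "u v* G = 0" by simp
      have "\<forall>r\<in>I0. u $ r = 0" using b by (simp add: sum_nonneg_eq_0_iff)
      then have "u \<in> TJ J" using a u by (simp add: TJ_def CJ_def)
      then have "u \<bullet> u \<le> 0" using u by (simp add: CJ_def)
      then show False using u by (simp add: inner_gt_zero_iff[symmetric] del: inner_gt_zero_iff)
    qed
  qed
qed

lemma hoffman: "\<exists>\<theta>>0. \<forall>x\<in>DD. \<exists>p\<in>PP. norm (x - p) \<le> \<theta> * (norm (x v* G - q0) + (\<Sum>r\<in>I0. \<bar>x $ r\<bar>))"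
proof -
  have "\<forall>J. \<exists>c. c > 0 \<and> (\<forall>u\<in>CJ J. c * norm u \<le> phi u)" using cone_bound by blast
  then obtain cf where cf: "\<And>J. cf J > 0" "\<And>J u. u \<in> CJ J \<Longrightarrow> cf J * norm u \<le> phi u" by metis
  define cmin where "cmin = Min (range cf)"
  have cmin: "cmin > 0" using cf(1) by (simp add: cmin_def)
  have cmin_le: "cmin \<le> cf J" for J by (simp add: cmin_def)
  have "\<exists>p\<in>PP. norm (x - p) \<le> (1/cmin) * (norm (x v* G - q0) + (\<Sum>r\<in>I0. \<bar>x $ r\<bar>))" if x: "x \<in> DD" for x
  proof -
    define p where "p = closest_point PP x"
    have pP: "p \<in> PP" unfolding p_def using closest_point_in_set[OF PP_closed] PP_ne by blast
    have pD: "p \<in> DD" and pq: "p v* G = q0" and pz: "\<And>r. r \<in> I0 \<Longrightarrow> p $ r = 0"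
      using pP by (auto simp: PP_def)
    define J where "J = {r. \<not> eqr r \<and> p $ r = 0}"
    define \<delta> where "\<delta> = Min (insert 1 ((\<lambda>r. p $ r) ` {r. \<not> eqr r \<and> p $ r \<noteq> 0}))"
    have ppos: "p $ r > 0" if "\<not> eqr r" "p $ r \<noteq> 0" for r
      using pD that by (force simp: dualset_def)
    have \<delta>: "\<delta> > 0" using ppos by (auto simp: \<delta>_def)
    have \<delta>le: "\<delta> \<le> p $ r" if "\<not> eqr r" "p $ r \<noteq> 0" for r
      using that by (simp add: \<delta>_def)
    define u where "u = x - p"
    have uC: "u \<in> CJ J" unfolding CJ_def
    proof (intro CollectI conjI ballI)
      fix r assume "r \<in> J"
      then show "u $ r \<ge> 0" using x by (simp add: J_def u_def dualset_def)
    next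
      fix v assume v: "v \<in> TJ J"
      have vG: "v v* G = 0" and vz: "\<And>r. r \<in> I0 \<Longrightarrow> v $ r = 0" and vJ: "\<And>r. r \<in> J \<Longrightarrow> v $ r \<ge> 0"
        using v by (auto simp: TJ_def)
      define t where "t = \<delta> / (norm v + 1)"
      have t: "t > 0" using \<delta> by (simp add: t_def add_nonneg_pos)
      have tv: "t * norm v < \<delta>"
      proof -
        have "t * norm v = \<delta> * (norm v / (norm v + 1))" by (simp add: t_def)
        also have "\<dots> < \<delta> * 1" using \<delta> norm_ge_zero[of v]
          by (intro mult_strict_left_mono) (auto simp: divide_less_eq add_nonneg_pos[of "norm v" 1])
        finally show ?thesis by simp
      qed
      have pt: "p + t *\<^sub>R v \<in> PP"
      proof -
        have "(p + t *\<^sub>R v) v* G = q0" using vG_lin[of 1 p t v G] pq vG by simp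
        moreover have "\<forall>r\<in>I0. (p + t *\<^sub>R v) $ r = 0" using pz vz by simp
        moreover have "p + t *\<^sub>R v \<in> DD" unfolding dualset_def
        proof (intro CollectI allI impI)
          fix r assume r: "\<not> eqr r"
          show "0 \<le> (p + t *\<^sub>R v) $ r"
          proof (cases "p $ r = 0")
            case True
            then have "v $ r \<ge> 0" using vJ r by (simp add: J_def)
            then show ?thesis using True t by simp
          next
            case False
            have "\<bar>t * v $ r\<bar> \<le> t * norm v" using t component_le_norm_cart[of v r]
              by (simp add: abs_mult mult_left_mono)
            then have "\<bar>t * v $ r\<bar> < p $ r" using tv \<delta>le[OF r False] by linarith
            then show ?thesis by simp
          qed
        qed
        ultimately show ?thesis by (simp add: PP_def)
      qed
      have "(x - p) \<bullet> ((p + t *\<^sub>R v) - p) \<le> 0"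
        unfolding p_def by (rule closest_point_dot[OF PP_convex PP_closed pt[unfolded p_def]])
      then have "t * (u \<bullet> v) \<le> 0" by (simp add: u_def inner_scaleR_right)
      then show "u \<bullet> v \<le> 0" using t by (simp add: mult_le_0_iff)
    qed
    have "phi u = norm (x v* G - q0) + (\<Sum>r\<in>I0. \<bar>x $ r\<bar>)"
      using pq pz by (simp add: phi_def u_def vector_matrix_mult_diff_distrib)
    moreover have "cmin * norm u \<le> phi u"
      using cf(2)[OF uC] cmin_le[of J] by (meson mult_right_mono norm_ge_zero order_trans)
    ultimately have "norm u \<le> (1/cmin) * (norm (x v* G - q0) + (\<Sum>r\<in>I0. \<bar>x $ r\<bar>))"
      using cmin by (simp add: field_simps)
    then show ?thesis using pP by (auto simp: u_def)
  qed
  then show ?thesis using cmin by (intro exI[of _ "1/cmin"]) auto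
qed

end


lemma arith_quad:
  fixes s a B x \<rho> :: real
  assumes s: "s > 0" and a: "a \<ge> 0" and B: "B \<ge> 0" and x: "x \<ge> 0" and r: "\<rho> \<ge> 0"
    and h: "s * x\<^sup>2 \<le> a * \<rho> * x + B * \<rho>\<^sup>2"
  shows "x \<le> \<rho> * (2*a/s + 1 + 2*B/s)"
proof -
  have c1: "\<rho> * 1 \<le> \<rho> * (2*a/s + 1 + 2*B/s)" using s a B r by (intro mult_left_mono) auto
  have c2: "\<rho> * (2*a/s) \<le> \<rho> * (2*a/s + 1 + 2*B/s)" using s a B r by (intro mult_left_mono) auto
  have c3: "\<rho> * (2*B/s) \<le> \<rho> * (2*a/s + 1 + 2*B/s)" using s a B r by (intro mult_left_mono) auto
  show ?thesis
  proof (cases "x \<le> \<rho>")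
    case True then show ?thesis using c1 by simp
  next
    case False
    then have xr: "x > \<rho>" by simp
    then have xp: "x > 0" using r by simp
    show ?thesis
    proof (cases "a * \<rho> * x \<ge> s * x\<^sup>2 / 2")
      case True
      then have "s * x * x \<le> 2 * a * \<rho> * x" by (simp add: power2_eq_square)
      then have "s * x \<le> 2 * a * \<rho>" using xp by (simp add: mult_le_cancel_right)
      then have "x \<le> \<rho> * (2*a/s)" using s by (simp add: field_simps)
      then show ?thesis using c2 by simp
    next
      case False
      then have "s * x\<^sup>2 / 2 < B * \<rho>\<^sup>2" using h by simp
      also have "B * \<rho>\<^sup>2 \<le> B * \<rho> * x" using B r xr by (simp add: power2_eq_square mult_left_mono mult.assoc)
      finally have "s * x * x < 2 * B * \<rho> * x" by (simp add: power2_eq_square)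
      then have "s * x < 2 * B * \<rho>" using xp by (simp add: mult_less_cancel_right)
      then have "x \<le> \<rho> * (2*B/s)" using s by (simp add: field_simps)
      then show ?thesis using c3 by simp
    qed
  qed
qed

lemma arith_T: fixes T a b :: real assumes "T \<ge> 0" "a \<ge> 0" "b \<ge> 0"
  shows "a * T + b \<le> (a + b) * (1 + T\<^sup>2)"
proof -
  have "0 \<le> (T - 1)\<^sup>2" by simp
  then have "2 * T \<le> 1 + T\<^sup>2" by (simp add: power2_eq_square algebra_simps)
  then have T: "T \<le> 1 + T\<^sup>2" using assms(1) by linarith
  have "a * T \<le> a * (1 + T\<^sup>2)" using assms T by (simp add: mult_left_mono)
  moreover have "b * 1 \<le> b * (1 + T\<^sup>2)" using assms by (intro mult_left_mono) auto
  ultimately show ?thesis by (simp add: algebra_simps)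
qed

lemma arith_kappa: fixes T a b \<kappa> \<rho> :: real
  assumes T: "T \<ge> 0" and ab: "a \<ge> 0" "b \<ge> 0" and k: "\<kappa> > 0" and r: "\<rho> \<ge> 0"
    and h: "\<kappa> \<le> \<rho> * (a * T + b)"
  shows "T \<le> ((a + b) / \<kappa>) * (1 + T\<^sup>2) * \<rho>"
proof -
  have "T * \<kappa> \<le> T * (\<rho> * (a * T + b))" using T h by (simp add: mult_left_mono)
  also have "\<dots> = \<rho> * (a * T\<^sup>2 + b * T)" by (simp add: power2_eq_square algebra_simps)
  also have "\<dots> \<le> \<rho> * ((a + b) * (1 + T\<^sup>2))"
  proof (rule mult_left_mono[OF _ r])
    have "a * T\<^sup>2 \<le> a * (1 + T\<^sup>2)" using ab by (intro mult_left_mono) auto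
    moreover have "b * T \<le> b * (1 + T\<^sup>2)" using ab T arith_T[of T 1 0] by (simp add: mult_left_mono)
    ultimately show "a * T\<^sup>2 + b * T \<le> (a + b) * (1 + T\<^sup>2)" by (simp add: algebra_simps)
  qed
  finally show ?thesis using k by (simp add: field_simps)
qed



locale probw = prob F blk \<sigma> Lf G g eqr
  for F :: "'m::finite \<Rightarrow> real^'n::finite \<Rightarrow> real" and blk :: "'n \<Rightarrow> 'm" and \<sigma> Lf :: "'m \<Rightarrow> real"
    and G :: "real^'n^'r::finite" and g :: "real^'r" and eqr :: "'r \<Rightarrow> bool" +
  fixes w :: "'r \<Rightarrow> real"
  assumes wpos: "\<And>r. w r > 0"
begin

definition "wmin = Min (range w)"
definition "wmax = Max (range w)"
lemma wmin_pos: "wmin > 0" using wpos by (simp add: wmin_def)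
lemma wmin_le: "wmin \<le> w r" by (simp add: wmin_def)
lemma wmax_ge: "w r \<le> wmax" by (simp add: wmax_def)
lemma wmax_pos: "wmax > 0" using wpos[of undefined] wmax_ge[of undefined] by linarith
lemma w1: "\<forall>r. w r > 0" using wpos by blast
lemma w0: "\<forall>r. w r \<ge> 0" using wpos less_imp_le by blast
lemma wn_le: "wnorm w x \<le> sqrt wmax * norm x" by (rule wnorm_le) (use w0 wmax_ge in auto)
lemma wn_ge: "sqrt wmin * norm x \<le> wnorm w x" by (rule wnorm_ge) (use wmin_le wmin_pos in auto)
lemma wn_nonneg: "wnorm w x \<ge> 0" by (rule wnorm_nonneg[OF w0])

abbreviation "lb l \<equiv> wproj w Lstar l"
abbreviation "TT l \<equiv> Tfun w Lstar l"
definition "lp l = clip eqr (l + winv w (gd l))"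
definition "rr l = lp l - l"

lemma lb: "lb l \<in> Lstar" "\<mu> \<in> Lstar \<Longrightarrow> wnorm w (l - lb l) \<le> wnorm w (l - \<mu>)"
  using wproj_char(1)[OF w1 PP_closed PP_convex, of l] PP_ne Lstar_eq by auto

definition "Rs = (SOME R. \<forall>\<mu>\<in>Lstar. norm \<mu> \<le> R)"
lemma Rs: "\<mu> \<in> Lstar \<Longrightarrow> norm \<mu> \<le> Rs"
  using someI_ex[OF Lstar_bounded] unfolding Rs_def by blast

lemma TT_ge: assumes "\<mu> \<in> Lstar" shows "wnorm w (l - \<mu>) \<le> TT l"
  unfolding Tfun_def
proof (rule cSUP_upper[OF assms])
  have "wnorm w (l - s) \<le> sqrt wmax * (norm l + Rs)" if "s \<in> Lstar" for s
  proof -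
    have "wnorm w (l - s) \<le> sqrt wmax * norm (l - s)" by (rule wn_le)
    also have "\<dots> \<le> sqrt wmax * (norm l + Rs)"
      using Rs[OF that] norm_triangle_ineq4[of l s] wmax_pos by (intro mult_left_mono) auto
    finally show ?thesis .
  qed
  then show "bdd_above ((\<lambda>s. wnorm w (l - s)) ` Lstar)" by (rule bdd_aboveI2)
qed

lemma TT_nonneg: "TT l \<ge> 0" using TT_ge[OF mu0, of l] wn_nonneg[of "l - mu0"] by linarith

lemma prox_eq: "proxres w eqr (graddual F G g) l = rr l"
  by (simp add: proxres_def wproj_dualset[OF w1] lp_def rr_def)

lemma lp_DD: "lp l \<in> DD" by (simp add: lp_def clip_in)

lemma lp_comp: "lp l $ i = (if eqr i then l $ i + gd l $ i / w i else max 0 (l $ i + gd l $ i / w i))"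
  by (simp add: lp_def clip_def winv_def)

lemma projVI: assumes mu: "\<mu> \<in> DD" shows "(gd l - (\<chi> i. w i * rr l $ i)) \<bullet> (\<mu> - lp l) \<le> 0"
proof -
  have "(gd l - (\<chi> i. w i * rr l $ i)) \<bullet> (\<mu> - lp l)
      = (\<Sum>i\<in>UNIV. (gd l $ i - w i * (lp l $ i - l $ i)) * (\<mu> $ i - lp l $ i))"
    by (simp add: inner_vec_real rr_def)
  also have "\<dots> \<le> 0"
  proof (rule sum_nonpos)
    fix i
    have wi: "w i > 0" by (rule wpos)
    show "(gd l $ i - w i * (lp l $ i - l $ i)) * (\<mu> $ i - lp l $ i) \<le> 0"
    proof (cases "eqr i \<or> l $ i + gd l $ i / w i \<ge> 0")
      case True
      then have "lp l $ i = l $ i + gd l $ i / w i" by (auto simp: lp_comp)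
      then have "gd l $ i - w i * (lp l $ i - l $ i) = 0" using wi by simp
      then show ?thesis by simp
    next
      case False
      then have ne: "\<not> eqr i" and neg: "l $ i + gd l $ i / w i < 0" by auto
      then have lp0: "lp l $ i = 0" by (simp add: lp_comp)
      have "gd l $ i - w i * (lp l $ i - l $ i) = w i * (l $ i + gd l $ i / w i)"
        using wi lp0 by (simp add: field_simps)
      also have "\<dots> < 0" using wi neg by (simp add: mult_pos_neg)
      finally have a: "gd l $ i - w i * (lp l $ i - l $ i) < 0" .
      have "\<mu> $ i - lp l $ i \<ge> 0" using mu ne lp0 by (simp add: dualset_def)
      then show ?thesis using a by (simp add: mult_nonpos_nonneg)
    qed
  qed
  finally show ?thesis .
qed

lemma Wr_norm: "norm (\<chi> i. w i * rr l $ i) \<le> wmax * norm (rr l)"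
proof (rule power2_le_imp_le)
  have "(norm (\<chi> i. w i * rr l $ i))\<^sup>2 = (\<Sum>i\<in>UNIV. (w i * rr l $ i)\<^sup>2)" by (simp add: norm_sq_vec)
  also have "\<dots> \<le> (\<Sum>i\<in>UNIV. wmax\<^sup>2 * (rr l $ i)\<^sup>2)"
  proof (rule sum_mono)
    fix i
    have "(w i)\<^sup>2 \<le> wmax\<^sup>2" using wpos[of i] wmax_ge[of i] by (simp add: power_mono)
    then show "(w i * rr l $ i)\<^sup>2 \<le> wmax\<^sup>2 * (rr l $ i)\<^sup>2"
      by (simp add: power_mult_distrib mult_right_mono)
  qed
  also have "\<dots> = (wmax * norm (rr l))\<^sup>2" by (simp add: norm_sq_vec power_mult_distrib sum_distrib_left)
  finally show "(norm (\<chi> i. w i * rr l $ i))\<^sup>2 \<le> (wmax * norm (rr l))\<^sup>2" .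
  show "0 \<le> wmax * norm (rr l)" using wmax_pos by simp
qed

definition "zs = zz mu0"
definition "xx l = norm (zz l - zs)"
lemma zLstar: "\<mu> \<in> Lstar \<Longrightarrow> zz \<mu> = zs" unfolding zs_def using z_common[OF _ mu0] .
lemma xx_nonneg: "xx l \<ge> 0" by (simp add: xx_def)

lemma gd_diff_star: "\<mu> \<in> Lstar \<Longrightarrow> gd l - gd \<mu> = G *v (zz l - zs)"
  using gd_diff[of l \<mu>] zLstar by simp

lemma F1: assumes mu: "\<mu> \<in> Lstar" shows "s0 * xx l \<le> Gn * norm (l - \<mu>)"
proof -
  have "s0 * (xx l)\<^sup>2 \<le> (gd l - gd \<mu>) \<bullet> (\<mu> - l)"
    using star[of \<mu> l] zLstar[OF mu] by (simp add: xx_def norm_minus_commute)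
  also have "\<dots> \<le> norm (gd l - gd \<mu>) * norm (\<mu> - l)" by (rule norm_cauchy_schwarz)
  also have "\<dots> \<le> Gn * xx l * norm (l - \<mu>)"
    using gd_diff_star[OF mu] G_bound[of "zz l - zs"]
    by (simp add: xx_def norm_minus_commute mult_right_mono)
  finally have h: "s0 * (xx l)\<^sup>2 \<le> Gn * xx l * norm (l - \<mu>)" .
  show ?thesis
  proof (cases "xx l = 0")
    case True then show ?thesis using Gn_nonneg by simp
  next
    case False
    then have "xx l > 0" using xx_nonneg[of l] by simp
    moreover have "(s0 * xx l) * xx l \<le> (Gn * norm (l - \<mu>)) * xx l"
      using h by (simp add: power2_eq_square algebra_simps)
    ultimately show ?thesis by (simp add: mult_le_cancel_right)
  qed
qed

lemma F3: assumes mu: "\<mu> \<in> Lstar"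
  shows "s0 * (xx l)\<^sup>2 \<le> wmax * norm (rr l) * norm (\<mu> - lp l) + Gn * xx l * norm (rr l)"
proof -
  define Wr where "Wr = (\<chi> i. w i * rr l $ i)"
  have ml: "\<mu> - l = (\<mu> - lp l) + rr l" by (simp add: rr_def)
  have A: "s0 * (xx l)\<^sup>2 \<le> (gd l - gd \<mu>) \<bullet> (\<mu> - l)"
    using star[of \<mu> l] zLstar[OF mu] by (simp add: xx_def norm_minus_commute)
  have B: "(gd l - gd \<mu>) \<bullet> (\<mu> - l) = gd l \<bullet> (\<mu> - lp l) - gd \<mu> \<bullet> (\<mu> - lp l) + (gd l - gd \<mu>) \<bullet> rr l"
    unfolding ml by (simp add: inner_add_right inner_diff_left algebra_simps)
  have C: "gd l \<bullet> (\<mu> - lp l) \<le> Wr \<bullet> (\<mu> - lp l)"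
    using projVI[OF Lstar_sub[THEN subsetD, OF mu], of l] by (simp add: Wr_def inner_diff_left)
  have D: "Wr \<bullet> (\<mu> - lp l) \<le> wmax * norm (rr l) * norm (\<mu> - lp l)"
    using norm_cauchy_schwarz[of Wr "\<mu> - lp l"] Wr_norm[of l]
    by (simp add: Wr_def) (meson mult_right_mono norm_ge_zero order_trans)
  have E: "0 \<le> gd \<mu> \<bullet> (\<mu> - lp l)"
    using max_imp_VI[OF mu] lp_DD[of l] by (simp add: VI_def inner_diff_right)
  have H: "(gd l - gd \<mu>) \<bullet> rr l \<le> Gn * xx l * norm (rr l)"
  proof -
    have "(gd l - gd \<mu>) \<bullet> rr l \<le> norm (gd l - gd \<mu>) * norm (rr l)" by (rule norm_cauchy_schwarz)
    also have "\<dots> \<le> Gn * xx l * norm (rr l)"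
      using gd_diff_star[OF mu] G_bound[of "zz l - zs"] by (simp add: xx_def mult_right_mono)
    finally show ?thesis .
  qed
  show ?thesis using A B C D E H by linarith
qed

end


context probw begin

lemma nrm_le: "norm x \<le> wnorm w x / sqrt wmin"
  using wn_ge[of x] wmin_pos by (simp add: pos_le_divide_eq mult.commute)

definition "Tn l = TT l / sqrt wmin"
lemma Tn_nonneg: "Tn l \<ge> 0" using TT_nonneg wmin_pos by (simp add: Tn_def)

lemma dist_Lstar: assumes "\<mu> \<in> Lstar" shows "norm (l - \<mu>) \<le> Tn l"
proof -
  have "wnorm w (l - \<mu>) / sqrt wmin \<le> TT l / sqrt wmin"
    using TT_ge[OF assms, of l] by (rule divide_right_mono) (use wmin_pos in simp)
  then show ?thesis using nrm_le[of "l - \<mu>"] unfolding Tn_def by linarith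
qed

lemma Rs_nonneg: "Rs \<ge> 0" using Rs[OF mu0] norm_ge_zero[of mu0] by linarith

lemma nl_bound: "norm l \<le> Tn l + Rs"
  using dist_Lstar[OF mu0, of l] Rs[OF mu0] norm_triangle_sub[of l mu0] by linarith

lemma gradbound: "norm (l v* G - q0) \<le> \<bar>Lsum\<bar> * xx l"
proof -
  have "l v* G - q0 = grad zs - grad (zz l)"
    using vG_eq[of l] vG_eq[of mu0] by (simp add: q0_def zs_def)
  then have "norm (l v* G - q0) \<le> Lsum * xx l"
    using grad_lip[of zs "zz l"] by (simp add: xx_def norm_minus_commute)
  also have "\<dots> \<le> \<bar>Lsum\<bar> * xx l" using xx_nonneg by (simp add: mult_right_mono)
  finally show ?thesis .
qed

definition "th = (SOME \<theta>. \<theta> > 0 \<and> (\<forall>x\<in>DD. \<exists>p\<in>PP. norm (x - p) \<le> \<theta> * (norm (x v* G - q0) + (\<Sum>r\<in>I0. \<bar>x $ r\<bar>))))"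
lemma th: "th > 0" "\<And>x. x \<in> DD \<Longrightarrow> \<exists>p\<in>PP. norm (x - p) \<le> th * (norm (x v* G - q0) + (\<Sum>r\<in>I0. \<bar>x $ r\<bar>))"
  using someI_ex[OF hoffman] unfolding th_def by blast+

lemma hof: "\<exists>p\<in>Lstar. norm (lp l - p) \<le> th * (\<bar>Lsum\<bar> * xx l + Gt * norm (rr l) + (\<Sum>r\<in>I0. \<bar>lp l $ r\<bar>))"
proof -
  obtain p where p: "p \<in> PP" "norm (lp l - p) \<le> th * (norm (lp l v* G - q0) + (\<Sum>r\<in>I0. \<bar>lp l $ r\<bar>))"
    using th(2)[OF lp_DD] by blast
  have "lp l v* G - q0 = (l v* G - q0) + rr l v* G"
    by (simp add: rr_def vector_matrix_mult_diff_distrib)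
  then have "norm (lp l v* G - q0) = norm ((l v* G - q0) + rr l v* G)" by (simp only:)
  then have "norm (lp l v* G - q0) \<le> \<bar>Lsum\<bar> * xx l + Gt * norm (rr l)"
    using gradbound[of l] Gt_bound[of "rr l"] norm_triangle_ineq[of "l v* G - q0" "rr l v* G"] by linarith
  then have "norm (lp l - p) \<le> th * (\<bar>Lsum\<bar> * xx l + Gt * norm (rr l) + (\<Sum>r\<in>I0. \<bar>lp l $ r\<bar>))"
    using p(2) th(1) by (smt (verit) mult_left_mono)
  then show ?thesis using p(1) Lstar_eq by blast
qed

definition "sm = Min (insert 1 ((\<lambda>r. - gs $ r) ` I0))"
lemma sm_pos: "sm > 0" by (simp add: sm_def I0_def)
lemma sm_le: "r \<in> I0 \<Longrightarrow> sm \<le> - gs $ r" by (simp add: sm_def)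

lemma I0bound: assumes small: "Gn * xx l \<le> sm/2"
  shows "(\<Sum>r\<in>I0. \<bar>lp l $ r\<bar>) \<le> real (card I0) * (2*wmax/sm * norm l * norm (rr l))"
proof (rule sum_bounded_above)
  fix r assume r: "r \<in> I0"
  have ne: "\<not> eqr r" using r by (simp add: I0_def)
  have gsr: "gs $ r \<le> - sm" using sm_le[OF r] by simp
  have "gd l = gd mu0 + G *v (zz l - zs)" using gd_diff_star[OF mu0, of l] by (simp add: algebra_simps)
  then have gdr: "gd l $ r = gs $ r + (G *v (zz l - zs)) $ r" by (simp add: gs_def)
  have "\<bar>(G *v (zz l - zs)) $ r\<bar> \<le> Gn * xx l"
    using component_le_norm_cart[of "G *v (zz l - zs)" r] G_bound[of "zz l - zs"] by (simp add: xx_def)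
  then have gdneg: "gd l $ r \<le> - sm / 2" using gdr gsr small by linarith
  have wr: "w r > 0" by (rule wpos)
  define q where "q = gd l $ r / w r"
  have qneg: "q < 0" using gdneg sm_pos wr by (simp add: q_def divide_neg_pos)
  have qw: "q * w r = gd l $ r" using wr by (simp add: q_def)
  have "q * wmax \<le> q * w r" using qneg wmax_ge[of r] by (simp add: mult_le_cancel_left)
  then have "q * wmax \<le> - sm / 2" using qw gdneg by linarith
  then have qb: "1 \<le> (- q) * (2 * wmax / sm)" using sm_pos wmax_pos by (simp add: field_simps)
  have RHS0: "0 \<le> 2*wmax/sm * norm l * norm (rr l)" using sm_pos wmax_pos by simp
  show "\<bar>lp l $ r\<bar> \<le> 2*wmax/sm * norm l * norm (rr l)"
  proof (cases "l $ r + q \<le> 0")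
    case True
    then have "lp l $ r = 0" using ne by (simp add: lp_comp q_def)
    then show ?thesis using RHS0 by simp
  next
    case False
    then have lpr: "lp l $ r = l $ r + q" using ne by (simp add: lp_comp q_def)
    then have rrr: "rr l $ r = q" by (simp add: rr_def)
    have "\<bar>lp l $ r\<bar> \<le> norm l" using lpr False qneg component_le_norm_cart[of l r] by simp
    also have "\<dots> \<le> norm l * ((- q) * (2 * wmax / sm))" using mult_left_mono[OF qb norm_ge_zero[of l]] by simp
    also have "\<dots> \<le> norm l * (norm (rr l) * (2 * wmax / sm))"
    proof -
      have "- q \<le> norm (rr l)" using component_le_norm_cart[of "rr l" r] rrr qneg by simp
      then show ?thesis using sm_pos wmax_pos by (intro mult_left_mono mult_right_mono) auto
    qed
    finally show ?thesis by (simp add: algebra_simps)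
  qed
qed

end


context probw begin

lemma rr_nonneg: "norm (rr l) \<ge> 0" by simp

lemma case1: assumes "norm (rr l) \<ge> 1"
  shows "wnorm w (l - lb l) \<le> 1 * (1 + (TT l)\<^sup>2) * norm (rr l)"
proof -
  have "wnorm w (l - lb l) \<le> TT l" by (rule TT_ge[OF lb(1)])
  also have "\<dots> \<le> 1 + (TT l)\<^sup>2" using arith_T[of "TT l" 1 0] TT_nonneg by simp
  also have "\<dots> \<le> (1 + (TT l)\<^sup>2) * norm (rr l)"
    using assms mult_left_mono[of 1 "norm (rr l)" "1 + (TT l)\<^sup>2"] by simp
  finally show ?thesis by simp
qed

definition "ka = Gn\<^sup>2 * (wmax + Gn\<^sup>2 / s0) / sqrt wmin"
definition "kb = Gn\<^sup>2 * wmax"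
definition "kappa = s0 * sm\<^sup>2 / 4"
definition "K2 = (ka + kb) / kappa"

lemma ka_nonneg: "ka \<ge> 0" using wmax_pos s0_pos wmin_pos by (simp add: ka_def)
lemma kb_nonneg: "kb \<ge> 0" using wmax_pos by (simp add: kb_def)
lemma kappa_pos: "kappa > 0" using s0_pos sm_pos by (simp add: kappa_def)
lemma K2_nonneg: "K2 \<ge> 0" using ka_nonneg kb_nonneg kappa_pos by (simp add: K2_def)

lemma case2: assumes r1: "norm (rr l) < 1" and big: "Gn * xx l > sm/2"
  shows "wnorm w (l - lb l) \<le> K2 * (1 + (TT l)\<^sup>2) * norm (rr l)"
proof -
  define \<mu> where "\<mu> = lb l"
  have mu: "\<mu> \<in> Lstar" unfolding \<mu>_def by (rule lb(1))
  define x where "x = xx l"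
  define \<rho> where "\<rho> = norm (rr l)"
  have x0: "x \<ge> 0" and r0: "\<rho> \<ge> 0" by (simp_all add: x_def \<rho>_def xx_nonneg)
  have A: "s0 * x\<^sup>2 \<le> wmax * \<rho> * norm (\<mu> - lp l) + Gn * x * \<rho>"
    using F3[OF mu, of l] by (simp add: x_def \<rho>_def)
  have eq: "\<mu> - lp l = (\<mu> - l) - rr l" by (simp add: rr_def)
  have "norm (\<mu> - lp l) \<le> norm (\<mu> - l) + norm (rr l)" unfolding eq by (rule norm_triangle_ineq4)
  then have "norm (\<mu> - lp l) \<le> norm (l - \<mu>) + \<rho>" by (simp add: \<rho>_def norm_minus_commute)
  also have "\<dots> \<le> Tn l + 1" using dist_Lstar[OF mu, of l] r1 by (simp add: \<rho>_def)
  finally have B: "norm (\<mu> - lp l) \<le> Tn l + 1" .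
  have "s0 * x \<le> Gn * Tn l" using F1[OF mu, of l] dist_Lstar[OF mu, of l] Gn_nonneg
    by (simp add: x_def) (meson mult_left_mono order_trans)
  then have "(Gn / s0) * (s0 * x) \<le> (Gn / s0) * (Gn * Tn l)"
    using Gn_nonneg s0_pos by (intro mult_left_mono) auto
  then have C: "Gn * x \<le> Gn\<^sup>2 * Tn l / s0" using s0_pos by (simp add: power2_eq_square field_simps)
  have "wmax * \<rho> * norm (\<mu> - lp l) \<le> wmax * \<rho> * (Tn l + 1)"
    using B wmax_pos r0 by (intro mult_left_mono) auto
  moreover have "Gn * x * \<rho> \<le> (Gn\<^sup>2 * Tn l / s0) * \<rho>" using C r0 by (rule mult_right_mono)
  ultimately have "s0 * x\<^sup>2 \<le> \<rho> * (wmax * (Tn l + 1) + Gn\<^sup>2 * Tn l / s0)"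
    using A by (simp add: algebra_simps)
  then have D: "Gn\<^sup>2 * (s0 * x\<^sup>2) \<le> Gn\<^sup>2 * (\<rho> * (wmax * (Tn l + 1) + Gn\<^sup>2 * Tn l / s0))"
    by (rule mult_left_mono) simp
  have "(sm/2)\<^sup>2 < (Gn * x)\<^sup>2" using big sm_pos by (intro power_strict_mono) (auto simp: x_def)
  then have "s0 * (sm/2)\<^sup>2 < s0 * (Gn * x)\<^sup>2" using s0_pos by simp
  moreover have "s0 * (Gn * x)\<^sup>2 = Gn\<^sup>2 * (s0 * x\<^sup>2)" by (simp add: power_mult_distrib)
  moreover have "kappa = s0 * (sm/2)\<^sup>2" by (simp add: kappa_def power_divide)
  moreover have "Gn\<^sup>2 * (\<rho> * (wmax * (Tn l + 1) + Gn\<^sup>2 * Tn l / s0))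
      = \<rho> * (Gn\<^sup>2 * (wmax * (Tn l + 1) + Gn\<^sup>2 * Tn l / s0))" by (rule mult.left_commute)
  ultimately have "kappa < \<rho> * (Gn\<^sup>2 * (wmax * (Tn l + 1) + Gn\<^sup>2 * Tn l / s0))"
    using D by linarith
  also have "Gn\<^sup>2 * (wmax * (Tn l + 1) + Gn\<^sup>2 * Tn l / s0) = ka * TT l + kb"
    using wmin_pos s0_pos by (simp add: ka_def kb_def Tn_def field_simps)
  finally have E: "kappa \<le> \<rho> * (ka * TT l + kb)" by simp
  have "TT l \<le> ((ka + kb) / kappa) * (1 + (TT l)\<^sup>2) * \<rho>"
    by (rule arith_kappa[OF TT_nonneg ka_nonneg kb_nonneg kappa_pos r0 E])
  moreover have "wnorm w (l - lb l) \<le> TT l" by (rule TT_ge[OF lb(1)])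
  ultimately show ?thesis by (simp add: K2_def \<rho>_def)
qed

end


context probw begin

definition "La = \<bar>Lsum\<bar>"
definition "cI = real (card I0) * (2*wmax/sm)"
definition "aa = wmax*th*La + Gn"
definition "cx = 2*aa/s0 + 1 + 2*(wmax*th*Gt)/s0"
definition "dx = 2*(wmax*th*cI)/s0"
definition "AA = 1 + th*(La*cx + Gt)"
definition "BB = th*(La*dx + cI)"
definition "C3 = BB / sqrt wmin + (AA + BB*Rs)"
definition "K3 = sqrt wmax * C3"

lemma La_nn: "La \<ge> 0" by (simp add: La_def)
lemma cI_nn: "cI \<ge> 0" using wmax_pos sm_pos by (simp add: cI_def)
lemma aa_nn: "aa \<ge> 0" using wmax_pos th(1) La_nn Gn_nonneg by (simp add: aa_def)
lemma cx_nn: "cx \<ge> 0" using aa_nn s0_pos wmax_pos th(1) Gt_nonneg by (simp add: cx_def)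
lemma dx_nn: "dx \<ge> 0" using cI_nn s0_pos wmax_pos th(1) by (simp add: dx_def)
lemma AA_nn: "AA \<ge> 0" using cx_nn La_nn th(1) Gt_nonneg by (simp add: AA_def)
lemma BB_nn: "BB \<ge> 0" using dx_nn La_nn th(1) cI_nn by (simp add: BB_def)
lemma C3_nn: "C3 \<ge> 0" using AA_nn BB_nn Rs_nonneg wmin_pos by (simp add: C3_def)
lemma K3_nn: "K3 \<ge> 0" using C3_nn wmax_pos by (simp add: K3_def)

lemma case3: assumes small: "Gn * xx l \<le> sm/2"
  shows "wnorm w (l - lb l) \<le> K3 * (1 + (TT l)\<^sup>2) * norm (rr l)"
proof -
  define x where "x = xx l"
  define \<rho> where "\<rho> = norm (rr l)"
  define nl where "nl = norm l"
  have x0: "x \<ge> 0" and r0: "\<rho> \<ge> 0" and nl0: "nl \<ge> 0" by (simp_all add: x_def \<rho>_def nl_def xx_nonneg)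
  obtain p where p: "p \<in> Lstar"
    and hp0: "norm (lp l - p) \<le> th * (La * x + Gt * \<rho> + (\<Sum>r\<in>I0. \<bar>lp l $ r\<bar>))"
    using hof[of l] unfolding La_def x_def \<rho>_def by blast
  have Sb: "(\<Sum>r\<in>I0. \<bar>lp l $ r\<bar>) \<le> cI * nl * \<rho>"
    using I0bound[OF small] by (simp add: cI_def nl_def \<rho>_def algebra_simps)
  have "th * (La * x + Gt * \<rho> + (\<Sum>r\<in>I0. \<bar>lp l $ r\<bar>)) \<le> th * (La * x + Gt * \<rho> + cI * nl * \<rho>)"
    by (rule mult_left_mono) (use Sb th(1) in auto)
  then have hp: "norm (lp l - p) \<le> th * (La * x + Gt * \<rho> + cI * nl * \<rho>)"
    using hp0 by linarith
  have F: "s0 * x\<^sup>2 \<le> wmax * \<rho> * norm (lp l - p) + Gn * x * \<rho>"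
    using F3[OF p, of l] by (simp add: x_def \<rho>_def norm_minus_commute)
  have q1: "wmax * \<rho> * norm (lp l - p) \<le> wmax * \<rho> * (th * (La * x + Gt * \<rho> + cI * nl * \<rho>))"
    using hp wmax_pos r0 by (intro mult_left_mono) auto
  define B where "B = wmax * th * (Gt + cI * nl)"
  have B0: "B \<ge> 0" using wmax_pos th(1) Gt_nonneg cI_nn nl0 by (simp add: B_def)
  have "wmax * \<rho> * (th * (La * x + Gt * \<rho> + cI * nl * \<rho>)) + Gn * x * \<rho> = aa * \<rho> * x + B * \<rho>\<^sup>2"
    by (simp add: aa_def B_def power2_eq_square algebra_simps)
  then have q2: "s0 * x\<^sup>2 \<le> aa * \<rho> * x + B * \<rho>\<^sup>2" using F q1 by linarith
  have "x \<le> \<rho> * (2*aa/s0 + 1 + 2*B/s0)" by (rule arith_quad[OF s0_pos aa_nn B0 x0 r0 q2])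
  also have "2*aa/s0 + 1 + 2*B/s0 = cx + dx * nl"
    using s0_pos by (simp add: cx_def dx_def B_def field_simps)
  finally have xb: "x \<le> \<rho> * (cx + dx * nl)" .
  have "La * x \<le> La * (\<rho> * (cx + dx * nl))" using xb La_nn by (rule mult_left_mono)
  then have "th * (La * x + Gt * \<rho> + cI * nl * \<rho>) \<le> th * (La * (\<rho> * (cx + dx * nl)) + Gt * \<rho> + cI * nl * \<rho>)"
    using th(1) by (intro mult_left_mono) auto
  also have "\<dots> = \<rho> * (th * (La * cx + Gt) + BB * nl)" by (simp add: BB_def algebra_simps)
  finally have lpp: "norm (lp l - p) \<le> \<rho> * (th * (La * cx + Gt) + BB * nl)" using hp by linarith
  have eq: "l - p = (lp l - p) - rr l" by (simp add: rr_def)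
  have "norm (l - p) \<le> norm (lp l - p) + \<rho>" unfolding eq \<rho>_def by (rule norm_triangle_ineq4)
  also have "\<dots> \<le> \<rho> * (AA + BB * nl)" using lpp by (simp add: AA_def algebra_simps)
  also have "\<dots> \<le> \<rho> * (BB / sqrt wmin * TT l + (AA + BB * Rs))"
  proof (rule mult_left_mono[OF _ r0])
    have "BB * nl \<le> BB * (Tn l + Rs)" using nl_bound[of l] BB_nn by (simp add: nl_def mult_left_mono)
    then show "AA + BB * nl \<le> BB / sqrt wmin * TT l + (AA + BB * Rs)" by (simp add: Tn_def algebra_simps)
  qed
  also have "\<dots> \<le> \<rho> * (C3 * (1 + (TT l)\<^sup>2))"
    using arith_T[OF TT_nonneg, of "BB / sqrt wmin" "AA + BB * Rs"] BB_nn AA_nn Rs_nonneg wmin_pos r0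
    by (intro mult_left_mono) (auto simp: C3_def)
  finally have lp_final: "norm (l - p) \<le> \<rho> * (C3 * (1 + (TT l)\<^sup>2))" .
  have "wnorm w (l - lb l) \<le> wnorm w (l - p)" by (rule lb(2)[OF p])
  also have "\<dots> \<le> sqrt wmax * norm (l - p)" by (rule wn_le)
  also have "\<dots> \<le> sqrt wmax * (\<rho> * (C3 * (1 + (TT l)\<^sup>2)))" using lp_final wmax_pos by (intro mult_left_mono) auto
  finally show ?thesis by (simp add: K3_def \<rho>_def algebra_simps)
qed

lemma main_rho: "\<exists>K>0. \<forall>l. wnorm w (l - lb l) \<le> K * (1 + (TT l)\<^sup>2) * norm (rr l)"
proof (intro exI[of _ "1 + K2 + K3"] conjI allI)
  show "0 < 1 + K2 + K3" using K2_nonneg K3_nn by simp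
  fix l
  have P: "0 \<le> (1 + (TT l)\<^sup>2) * norm (rr l)" by simp
  have mono: "\<And>c. 0 \<le> c \<Longrightarrow> c \<le> 1 + K2 + K3 \<Longrightarrow> c * (1 + (TT l)\<^sup>2) * norm (rr l) \<le> (1 + K2 + K3) * (1 + (TT l)\<^sup>2) * norm (rr l)"
  proof -
    fix c :: real assume "0 \<le> c" "c \<le> 1 + K2 + K3"
    then have "c * ((1 + (TT l)\<^sup>2) * norm (rr l)) \<le> (1 + K2 + K3) * ((1 + (TT l)\<^sup>2) * norm (rr l))"
      by (intro mult_right_mono[OF _ P])
    then show "c * (1 + (TT l)\<^sup>2) * norm (rr l) \<le> (1 + K2 + K3) * (1 + (TT l)\<^sup>2) * norm (rr l)"
      by (simp add: mult.assoc)
  qed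
  show "wnorm w (l - lb l) \<le> (1 + K2 + K3) * (1 + (TT l)\<^sup>2) * norm (rr l)"
  proof (cases "Gn * xx l \<le> sm/2")
    case True
    then show ?thesis using case3[OF True] mono[of K3] K2_nonneg K3_nn by linarith
  next
    case False
    show ?thesis
    proof (cases "norm (rr l) \<ge> 1")
      case True
      then show ?thesis using case1[OF True] mono[of 1] K2_nonneg K3_nn by linarith
    next
      case f2: False
      then show ?thesis using case2[of l] False mono[of K2] K2_nonneg K3_nn by linarith
    qed
  qed
qed

lemma final: "\<exists>c1>0. \<exists>c2>0. \<forall>l. wnorm w (l - wproj w Lstar l)
      \<le> (c1 + c2 * (TT l)\<^sup>2) * wnorm w (proxres w eqr (graddual F G g) l)"
proof -
  obtain K where K: "K > 0" "\<And>l. wnorm w (l - lb l) \<le> K * (1 + (TT l)\<^sup>2) * norm (rr l)"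
    using main_rho by blast
  define c where "c = K / sqrt wmin"
  have c: "c > 0" using K wmin_pos by (simp add: c_def)
  have "wnorm w (l - lb l) \<le> (c + c * (TT l)\<^sup>2) * wnorm w (proxres w eqr (graddual F G g) l)" for l
  proof -
    have "norm (rr l) \<le> wnorm w (rr l) / sqrt wmin" by (rule nrm_le)
    then have "K * (1 + (TT l)\<^sup>2) * norm (rr l) \<le> K * (1 + (TT l)\<^sup>2) * (wnorm w (rr l) / sqrt wmin)"
      using K(1) by (intro mult_left_mono) auto
    also have "\<dots> = (c + c * (TT l)\<^sup>2) * wnorm w (rr l)" by (simp add: c_def algebra_simps)
    finally show ?thesis using K(2)[of l] by (simp add: prox_eq)
  qed
  then show ?thesis using c by blast
qed

end

theorem theorem1:
  fixes F :: "'m::finite \<Rightarrow> real^'n \<Rightarrow> real"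
    and blk :: "'n \<Rightarrow> 'm"
    and \<sigma> Lf :: "'m \<Rightarrow> real"
    and G :: "real^'n^'r"
    and g :: "real^'r"
    and eqr :: "'r \<Rightarrow> bool"
    and rblk :: "'r \<Rightarrow> 'k::finite"
    and E :: "'k \<Rightarrow> 'm \<Rightarrow> bool"
  assumes sparsity: "\<And>j i r c. \<not> E j i \<Longrightarrow> rblk r = j \<Longrightarrow> blk c = i \<Longrightarrow> G $ r $ c = 0"
    and local_fi: "\<And>i. depends_only_on_block blk i (F i)"
    and sigma_pos: "\<And>i. \<sigma> i > 0"
    and strong_cvx: "\<And>i. block_strongly_convex blk i (\<sigma> i) (F i)"
    and lip_grad: "\<And>i. lipschitz_gradient (Lf i) (F i)"
    and A_full_row_rank: "\<And>v::real^'r. (\<forall>r. \<not> eqr r \<longrightarrow> v $ r = 0) \<Longrightarrow> v v* G = 0 \<Longrightarrow> v = 0"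
    and slater: "\<exists>z. \<forall>r. (eqr r \<longrightarrow> (G *v z) $ r = g $ r) \<and> (\<not> eqr r \<longrightarrow> (G *v z) $ r < g $ r)"
    and W_pos: "\<And>r. Wdiag G blk rblk E \<sigma> r > 0"
  shows "\<exists>c1 > 0. \<exists>c2 > 0. \<forall>l \<in> dualset eqr.
           (let w = Wdiag G blk rblk E \<sigma>;
                Lstar = dualopt F G g eqr
            in wnorm w (l - wproj w Lstar l)
               \<le> (c1 + c2 * (Tfun w Lstar l)\<^sup>2) * wnorm w (proxres w eqr (graddual F G g) l))"
proof -
  interpret probw F blk \<sigma> Lf G g eqr "Wdiag G blk rblk E \<sigma>"
    by unfold_locales (use sigma_pos strong_cvx lip_grad A_full_row_rank slater W_pos in auto)
  show ?thesis using final unfolding Let_def by blast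
qed

end
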